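(* Let $q\in[0,1)$ and let $T(z)=\sum_{k=0}^\infty T_kz^k$ be a $\mathbb C^{n\times m}$-valued power series converging in a neighbourhood of the origin. The following are equivalent: (1) there exist $N\in\mathbb N_0$ and $(C,A,B)\in\mathbb C^{n\times N}\times\mathbb C^{N\times N}\times\mathbb C^{N\times m}$ with $T(z)=C\prod_{j=0}^\infty(I_N-(1-q)zq^jA)^{-1}B$ near the origin; (2) the block Hankel matrix $H=\bigl([i+j]_q!\,T_{i+j}\bigr)_{i,j=0}^\infty$ has finite rank; (3) there exist $N\in\mathbb N_0$ and $(C,A,B)$ as in (1) with $T_k=\frac{CA^kB}{[k]_q!}$ for all $k\ge0$; (4) the linear span of the columns of the functions $R_q^kT$, $k=0,1,2,\ldots$, is finite dimensional.
   Context: $[0]_q=1$, $[k]_q=1+q+\cdots+q^{k-1}$ ($k\ge1$), $[k]_q!=\prod_{j=1}^k[j]_q$, $[0]_q!=1$; convention $q^0=1$. For $q\in(0,1)$, $(R_qf)(z)=\frac{f(z)-f(qz)}{(1-q)z}$; $R_0$ is the backward shift $(R_0f)(z)=\frac{f(z)-f(0)}{z}$, $(R_0f)(0)=f'(0)$; applied entrywise. *)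

theory Defs
  imports "HOL-Analysis.Analysis" "Jordan_Normal_Form.Matrix"
begin

text \<open>q-integers and q-factorials; note 0 ^ 0 = 1, matching the convention q^0 = 1.\<close>
definition qint :: "real \<Rightarrow> nat \<Rightarrow> real" where
  "qint q k = (\<Sum>i<k. q ^ i)"

definition qfact :: "real \<Rightarrow> nat \<Rightarrow> real" where
  "qfact q k = (\<Prod>j\<in>{1..k}. qint q j)"

definition minv :: "complex mat \<Rightarrow> complex mat" where
  "minv A = (SOME B. inverts_mat A B \<and> inverts_mat B A)"

definition Tser :: "nat \<Rightarrow> nat \<Rightarrow> (nat \<Rightarrow> complex mat) \<Rightarrow> complex \<Rightarrow> complex mat" where
  "Tser n m T z = mat n m (\<lambda>(i,j). \<Sum>k. T k $$ (i,j) * z ^ k)"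

fun qprod_part :: "real \<Rightarrow> complex mat \<Rightarrow> complex \<Rightarrow> nat \<Rightarrow> complex mat" where
  "qprod_part q A z 0 = 1\<^sub>m (dim_row A)"
| "qprod_part q A z (Suc J) = qprod_part q A z J *
     minv (1\<^sub>m (dim_row A) - (complex_of_real ((1 - q) * q ^ J) * z) \<cdot>\<^sub>m A)"

text \<open>The operator R_q on scalar functions (q = 0: backward shift); at z = 0 the value is f'(0).\<close>
definition Rq :: "real \<Rightarrow> (complex \<Rightarrow> complex) \<Rightarrow> complex \<Rightarrow> complex" where
  "Rq q f z = (if z = 0 then deriv f 0
               else (f z - f (complex_of_real q * z)) / (complex_of_real (1 - q) * z))"

definition RqM :: "real \<Rightarrow> nat \<Rightarrow> nat \<Rightarrow> (complex \<Rightarrow> complex mat) \<Rightarrow> complex \<Rightarrow> complex mat" where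
  "RqM q n m F = (\<lambda>z. mat n m (\<lambda>(i,j). Rq q (\<lambda>w. F w $$ (i,j)) z))"

definition fin_dim_span :: "('a \<Rightarrow> complex) set \<Rightarrow> bool" where
  "fin_dim_span S \<longleftrightarrow> (\<exists>F. finite F \<and> (\<forall>v\<in>S. \<exists>c. v = (\<lambda>x. \<Sum>f\<in>F. c f * f x)))"

end

theory Submission
  imports Defs "HOL-Library.Function_Algebras"
begin


lemma fsum_apply: "(\<Sum>v\<in>F. (g v :: 'a \<Rightarrow> 'b::comm_monoid_add)) x = (\<Sum>v\<in>F. g v x)"
  by (induction F rule: infinite_finite_induct) auto

interpretation fv: vector_space "(\<lambda>c (f::'a \<Rightarrow> complex) x. c * f x)"
  by unfold_locales (auto simp: algebra_simps plus_fun_def)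

lemma fv_sum_eq: "(\<Sum>v\<in>F. (\<lambda>x. u v * v x)) = (\<lambda>x. \<Sum>v\<in>F. u v * (v::'a \<Rightarrow> complex) x)"
  by (rule ext) (simp add: fsum_apply)

lemma fds_iff: "fin_dim_span S \<longleftrightarrow> (\<exists>F. finite F \<and> S \<subseteq> fv.span F)"
proof
  assume "fin_dim_span S"
  then obtain F where F: "finite F" "\<forall>v\<in>S. \<exists>c. v = (\<lambda>x. \<Sum>f\<in>F. c f * f x)"
    unfolding fin_dim_span_def by blast
  have "S \<subseteq> fv.span F"
  proof
    fix v assume "v \<in> S"
    then obtain c where "v = (\<lambda>x. \<Sum>f\<in>F. c f * f x)" using F by blast
    then show "v \<in> fv.span F" using F(1) by (simp add: fv.span_finite fv_sum_eq)
  qed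
  then show "\<exists>F. finite F \<and> S \<subseteq> fv.span F" using F by blast
next
  assume "\<exists>F. finite F \<and> S \<subseteq> fv.span F"
  then obtain F where F: "finite F" "S \<subseteq> fv.span F" by blast
  have "\<forall>v\<in>S. \<exists>c. v = (\<lambda>x. \<Sum>f\<in>F. c f * f x)"
  proof
    fix v assume "v \<in> S"
    then have "v \<in> range (\<lambda>u. \<Sum>v\<in>F. (\<lambda>x. u v * v x))"
      using F fv.span_finite[OF F(1)] by auto
    then show "\<exists>c. v = (\<lambda>x. \<Sum>f\<in>F. c f * f x)" by (auto simp: fv_sum_eq)
  qed
  then show "fin_dim_span S" unfolding fin_dim_span_def using F by blast
qed

lemma fds_indexed:
  fixes g :: "'i \<Rightarrow> 'a \<Rightarrow> complex"
  assumes "finite J" "\<forall>v\<in>S. \<exists>c. v = (\<lambda>x. \<Sum>p\<in>J. c p * g p x)"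
  shows "fin_dim_span S"
  unfolding fds_iff
proof (intro exI conjI)
  show "finite (g ` J)" using assms by simp
  show "S \<subseteq> fv.span (g ` J)"
  proof
    fix v assume "v \<in> S"
    then obtain c where v: "v = (\<lambda>x. \<Sum>p\<in>J. c p * g p x)" using assms by blast
    have "v = (\<Sum>p\<in>J. (\<lambda>x. c p * g p x))" unfolding v by (rule ext) (simp add: fsum_apply)
    also have "\<dots> \<in> fv.span (g ` J)"
      by (intro fv.span_sum fv.span_scale fv.span_base) auto
    finally show "v \<in> fv.span (g ` J)" .
  qed
qed

lemma subfamily_basis:
  fixes u :: "'i \<Rightarrow> 'a \<Rightarrow> complex"
  assumes "fin_dim_span (u ` I)"
  shows "\<exists>J. finite J \<and> J \<subseteq> I \<and> (\<forall>i\<in>I. \<exists>c. u i = (\<lambda>x. \<Sum>l\<in>J. c l * u l x))"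
proof -
  obtain F where F: "finite F" "u ` I \<subseteq> fv.span F" using assms unfolding fds_iff by blast
  obtain B where B: "B \<subseteq> u ` I" "fv.independent B" "u ` I \<subseteq> fv.span B"
    using fv.maximal_independent_subset by blast
  have fB: "finite B" using fv.independent_span_bound[OF F(1) B(2)] B(1) F(2) by blast
  define sel where "sel b = (SOME i. i \<in> I \<and> u i = b)" for b
  have sel: "sel b \<in> I \<and> u (sel b) = b" if "b \<in> B" for b
    unfolding sel_def by (rule someI_ex) (use that B(1) in auto)
  define J where "J = sel ` B"
  have uJ: "u ` J = B" unfolding J_def using sel by force
  have inj: "inj_on u J" unfolding J_def inj_on_def using sel by force
  have fJ: "finite J" unfolding J_def using fB by simp
  have JI: "J \<subseteq> I" unfolding J_def using sel by auto
  have "\<forall>i\<in>I. \<exists>c. u i = (\<lambda>x. \<Sum>l\<in>J. c l * u l x)"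
  proof
    fix i assume "i \<in> I"
    then have "u i \<in> fv.span B" using B by auto
    then obtain w where w: "u i = (\<Sum>v\<in>B. (\<lambda>x. w v * v x))"
      using fv.span_finite[OF fB] by auto
    have "u i = (\<lambda>x. \<Sum>v\<in>B. w v * v x)" using w by (simp add: fv_sum_eq)
    also have "\<dots> = (\<lambda>x. \<Sum>l\<in>J. w (u l) * u l x)"
      unfolding uJ[symmetric] by (subst sum.reindex[OF inj]) auto
    finally show "\<exists>c. u i = (\<lambda>x. \<Sum>l\<in>J. c l * u l x)" by (rule exI[of _ "\<lambda>l. w (u l)"])
  qed
  then show ?thesis using fJ JI by blast
qed

lemma fds_transfer:
  fixes u :: "'i \<Rightarrow> 'a \<Rightarrow> complex" and w :: "'i \<Rightarrow> 'b \<Rightarrow> complex"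
  assumes "fin_dim_span (u ` I)"
    and "\<And>J c i. finite J \<Longrightarrow> J \<subseteq> I \<Longrightarrow> i \<in> I \<Longrightarrow> u i = (\<lambda>x. \<Sum>l\<in>J. c l * u l x)
           \<Longrightarrow> w i = (\<lambda>y. \<Sum>l\<in>J. c l * w l y)"
  shows "fin_dim_span (w ` I)"
proof -
  obtain J where J: "finite J" "J \<subseteq> I" "\<forall>i\<in>I. \<exists>c. u i = (\<lambda>x. \<Sum>l\<in>J. c l * u l x)"
    using subfamily_basis[OF assms(1)] by blast
  show ?thesis
  proof (rule fds_indexed[OF J(1), of _ w], intro ballI)
    fix v assume "v \<in> w ` I"
    then obtain i where i: "i \<in> I" "v = w i" by blast
    then obtain c where "u i = (\<lambda>x. \<Sum>l\<in>J. c l * u l x)" using J by blast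
    then have "w i = (\<lambda>y. \<Sum>l\<in>J. c l * w l y)" using assms(2) J i by blast
    then show "\<exists>c. v = (\<lambda>x. \<Sum>p\<in>J. c p * w p x)" using i by blast
  qed
qed




lemma qint_Suc: "qint q (Suc k) = qint q k + q ^ k"
  by (simp add: qint_def)

lemma qint_ge1: assumes "0 \<le> q" "1 \<le> k" shows "1 \<le> qint q k"
proof -
  have "q ^ 0 \<le> (\<Sum>i<k. q ^ i)" by (rule member_le_sum) (use assms in auto)
  then show ?thesis by (simp add: qint_def)
qed

lemma qint_nonneg: "0 \<le> q \<Longrightarrow> 0 \<le> qint q k"
  by (simp add: qint_def sum_nonneg)

lemma qint_le: assumes "0 \<le> q" "q \<le> 1" shows "qint q k \<le> real k"
proof -
  have "(\<Sum>i<k. q ^ i) \<le> (\<Sum>i<k. 1)" by (rule sum_mono) (use assms in \<open>auto intro: power_le_one\<close>)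
  then show ?thesis by (simp add: qint_def)
qed

lemma qint_mult: "(1 - q) * qint q k = 1 - q ^ k"
  by (simp add: qint_def one_diff_power_eq)

lemma qfact_Suc: "qfact q (Suc k) = qfact q k * qint q (Suc k)"
  by (simp add: qfact_def)

lemma qfact_0[simp]: "qfact q 0 = 1"
  by (simp add: qfact_def)

lemma qfact_ge1: "0 \<le> q \<Longrightarrow> 1 \<le> qfact q k"
proof (induction k)
  case (Suc k)
  have "1 \<le> qint q (Suc k)" using Suc by (intro qint_ge1) auto
  then show ?case using Suc by (simp add: qfact_Suc) (metis mult_mono' mult.right_neutral zero_le_one)
qed simp

lemma qfact_pos: "0 \<le> q \<Longrightarrow> 0 < qfact q k"
  using qfact_ge1[of q k] by linarith

lemma mult_entry:
  assumes "X \<in> carrier_mat a b" "Y \<in> carrier_mat b c" "i < a" "j < c"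
  shows "(X * Y) $$ (i,j) = (\<Sum>k<b. X $$ (i,k) * Y $$ (k,j))"
  using assms by (simp add: scalar_prod_def atLeast0LessThan)

lemma pow_mat_Suc_left:
  assumes "A \<in> carrier_mat N N" shows "A * A ^\<^sub>m k = A ^\<^sub>m Suc k"
proof (induction k)
  case 0 then show ?case using assms by simp
next
  case (Suc k)
  have "A * A ^\<^sub>m Suc k = (A * A ^\<^sub>m k) * A" using assms by (simp add: assoc_mult_mat[of _ N N _ N _ N])
  also have "\<dots> = A ^\<^sub>m Suc (Suc k)" using Suc by simp
  finally show ?case .
qed

lemma pow_mat_add:
  assumes "A \<in> carrier_mat N N" shows "A ^\<^sub>m (i + j) = A ^\<^sub>m i * A ^\<^sub>m j"
proof (induction j)
  case 0 then show ?case using assms by simp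
next
  case (Suc j)
  have "A ^\<^sub>m (i + Suc j) = A ^\<^sub>m (i + j) * A" by simp
  also have "\<dots> = A ^\<^sub>m i * A ^\<^sub>m j * A" using Suc by simp
  also have "\<dots> = A ^\<^sub>m i * A ^\<^sub>m Suc j" using assms by (simp add: assoc_mult_mat[of _ N N _ N _ N])
  finally show ?case .
qed

definition hcol :: "real \<Rightarrow> nat \<Rightarrow> (nat \<Rightarrow> complex mat) \<Rightarrow> nat \<times> nat \<Rightarrow> nat \<times> nat \<Rightarrow> complex" where
  "hcol q n T = (\<lambda>(j,b). (\<lambda>(i,a). if a < n then complex_of_real (qfact q (i+j)) * T (i+j) $$ (a,b) else 0))"

lemma hcol_shift: "hcol q n T (Suc j, b) (i, a) = hcol q n T (j, b) (Suc i, a)"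
  by (simp add: hcol_def)

lemma P3_to_P2:
  assumes q: "0 \<le> q" and dims: "\<And>k. T k \<in> carrier_mat n m"
    and C: "C \<in> carrier_mat n N" and A: "A \<in> carrier_mat N N" and B: "B \<in> carrier_mat N m"
    and T: "\<And>k. T k = complex_of_real (1 / qfact q k) \<cdot>\<^sub>m (C * A ^\<^sub>m k * B)"
  shows "fin_dim_span (hcol q n T ` (UNIV \<times> {..<m}))"
proof (rule fds_indexed[of "{..<N}" _ "\<lambda>p (i,a). if a < n then (C * A ^\<^sub>m i) $$ (a,p) else 0"], simp, intro ballI)
  fix v assume "v \<in> hcol q n T ` (UNIV \<times> {..<m})"
  then obtain j b where v: "v = hcol q n T (j,b)" and b: "b < m" by auto
  have "v = (\<lambda>x. \<Sum>p<N. (A ^\<^sub>m j * B) $$ (p,b) * (case x of (i,a) \<Rightarrow> if a < n then (C * A ^\<^sub>m i) $$ (a,p) else 0))"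
  proof (rule ext, clarify)
    fix i a
    show "v (i,a) = (\<Sum>p<N. (A ^\<^sub>m j * B) $$ (p,b) * (if a < n then (C * A ^\<^sub>m i) $$ (a,p) else 0))"
    proof (cases "a < n")
      case True
      have qf: "complex_of_real (qfact q (i+j)) * complex_of_real (1 / qfact q (i+j)) = 1"
        using qfact_pos[OF q, of "i+j"] by (simp flip: of_real_mult)
      have "C * A ^\<^sub>m (i+j) * B = (C * A ^\<^sub>m i) * (A ^\<^sub>m j * B)"
      proof -
        have X: "A ^\<^sub>m i \<in> carrier_mat N N" "A ^\<^sub>m j \<in> carrier_mat N N" using A by auto
        have "C * A ^\<^sub>m (i+j) = C * A ^\<^sub>m i * A ^\<^sub>m j"
          using assoc_mult_mat[OF C X] by (simp add: pow_mat_add[OF A])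
        then show ?thesis using assoc_mult_mat[of "C * A ^\<^sub>m i" n N "A ^\<^sub>m j" N B m] C X B by simp
      qed
      moreover have "(C * A ^\<^sub>m i * (A ^\<^sub>m j * B)) $$ (a,b) = (\<Sum>p<N. (C * A ^\<^sub>m i) $$ (a,p) * (A ^\<^sub>m j * B) $$ (p,b))"
        by (rule mult_entry) (use C A B True b in auto)
      ultimately have "(C * A ^\<^sub>m (i+j) * B) $$ (a,b) = (\<Sum>p<N. (C * A ^\<^sub>m i) $$ (a,p) * (A ^\<^sub>m j * B) $$ (p,b))"
        by simp
      then show ?thesis using True b C A B qf qfact_pos[OF q, of "i+j"]
        by (simp add: v hcol_def T mult.commute mult.assoc flip: mult.assoc[of "complex_of_real _"])
    qed (simp add: v hcol_def)
  qed
  then show "\<exists>c. v = (\<lambda>x. \<Sum>p\<in>{..<N}. c p * (case x of (i,a) \<Rightarrow> if a < n then (C * A ^\<^sub>m i) $$ (a,p) else 0))"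
    by (rule exI[of _ "\<lambda>p. (A ^\<^sub>m j * B) $$ (p,b)"])
qed

lemma P2_to_P3:
  assumes q: "0 \<le> q" and dims: "\<And>k. T k \<in> carrier_mat n m"
    and fd: "fin_dim_span (hcol q n T ` (UNIV \<times> {..<m}))"
  shows "\<exists>N C A B. C \<in> carrier_mat n N \<and> A \<in> carrier_mat N N \<and> B \<in> carrier_mat N m \<and>
              (\<forall>k. T k = complex_of_real (1 / qfact q k) \<cdot>\<^sub>m (C * A ^\<^sub>m k * B))"
proof -
  define I where "I = (UNIV \<times> {..<m} :: (nat \<times> nat) set)"
  define h where "h = hcol q n T"
  obtain J where J: "finite J" "J \<subseteq> I" and rep: "\<forall>i\<in>I. \<exists>c. h i = (\<lambda>x. \<Sum>l\<in>J. c l * h l x)"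
    using subfamily_basis[OF fd] unfolding I_def h_def by blast
  obtain cf where cf: "\<And>i. i \<in> I \<Longrightarrow> h i = (\<lambda>x. \<Sum>l\<in>J. cf i l * h l x)"
    using bchoice[OF rep] by blast
  define N where "N = card J"
  obtain e where e: "bij_betw e {..<N} J"
    using ex_bij_betw_nat_finite[OF J(1)] unfolding N_def atLeast0LessThan by blast
  have sumJ: "(\<Sum>l\<in>J. g l) = (\<Sum>p<N. g (e p))" for g :: "nat \<times> nat \<Rightarrow> complex"
    using sum.reindex_bij_betw[OF e, of g] by simp
  have eI: "e p \<in> I" if "p < N" for p using e J(2) that bij_betwE by blast
  define A where "A = mat N N (\<lambda>(p,l). cf (Suc (fst (e l)), snd (e l)) (e p))"
  define B where "B = mat N m (\<lambda>(p,b). cf (0,b) (e p))"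
  define C where "C = mat n N (\<lambda>(a,p). h (e p) (0,a))"
  have A: "A \<in> carrier_mat N N" and B: "B \<in> carrier_mat N m" and C: "C \<in> carrier_mat n N"
    unfolding A_def B_def C_def by auto
  have hshift: "h (Suc j, b) (i, a) = h (j, b) (Suc i, a)" for j b i a
    unfolding h_def by (rule hcol_shift)
  have colrep: "h (Suc (fst (e l)), snd (e l)) x = (\<Sum>p<N. A $$ (p,l) * h (e p) x)" if "l < N" for l x
  proof -
    have "(Suc (fst (e l)), snd (e l)) \<in> I" using eI[OF that] unfolding I_def by auto
    from cf[OF this] show ?thesis using that by (simp add: sumJ A_def)
  qed
  have main: "h (j,b) = (\<lambda>x. \<Sum>p<N. (A ^\<^sub>m j * B) $$ (p,b) * h (e p) x)" if "b < m" for j b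
  proof (induction j)
    case 0
    have "(0,b) \<in> I" using that unfolding I_def by auto
    from cf[OF this] show ?case using A B that by (simp add: sumJ B_def)
  next
    case (Suc j)
    show ?case
    proof (rule ext, clarify)
      fix i a
      have "h (Suc j, b) (i,a) = h (j,b) (Suc i, a)" by (rule hshift)
      also have "\<dots> = (\<Sum>l<N. (A ^\<^sub>m j * B) $$ (l,b) * h (e l) (Suc i, a))"
        by (subst Suc) simp
      also have "\<dots> = (\<Sum>l<N. (A ^\<^sub>m j * B) $$ (l,b) * (\<Sum>p<N. A $$ (p,l) * h (e p) (i,a)))"
      proof (rule sum.cong[OF refl])
        fix l assume l: "l \<in> {..<N}"
        have "h (e l) (Suc i, a) = h (Suc (fst (e l)), snd (e l)) (i,a)"
          using hshift[of "fst (e l)" "snd (e l)" i a] by simp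
        then show "(A ^\<^sub>m j * B) $$ (l,b) * h (e l) (Suc i, a) = (A ^\<^sub>m j * B) $$ (l,b) * (\<Sum>p<N. A $$ (p,l) * h (e p) (i,a))"
          using colrep[of l "(i,a)"] l by simp
      qed
      also have "\<dots> = (\<Sum>l<N. \<Sum>p<N. (A ^\<^sub>m j * B) $$ (l,b) * (A $$ (p,l) * h (e p) (i,a)))"
        by (simp add: sum_distrib_left)
      also have "\<dots> = (\<Sum>p<N. \<Sum>l<N. (A ^\<^sub>m j * B) $$ (l,b) * (A $$ (p,l) * h (e p) (i,a)))"
        by (rule sum.swap)
      also have "\<dots> = (\<Sum>p<N. (\<Sum>l<N. A $$ (p,l) * (A ^\<^sub>m j * B) $$ (l,b)) * h (e p) (i,a))"
        by (simp add: sum_distrib_right sum_distrib_left mult_ac)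
      also have "\<dots> = (\<Sum>p<N. (A ^\<^sub>m Suc j * B) $$ (p,b) * h (e p) (i,a))"
      proof (rule sum.cong[OF refl])
        fix p assume p: "p \<in> {..<N}"
        have "A ^\<^sub>m Suc j * B = A * (A ^\<^sub>m j * B)"
          using pow_mat_Suc_left[OF A, of j] A B by (metis assoc_mult_mat pow_carrier_mat)
        moreover have "(A * (A ^\<^sub>m j * B)) $$ (p,b) = (\<Sum>l<N. A $$ (p,l) * (A ^\<^sub>m j * B) $$ (l,b))"
          by (rule mult_entry) (use A B p that in auto)
        ultimately show "(\<Sum>l<N. A $$ (p,l) * (A ^\<^sub>m j * B) $$ (l,b)) * h (e p) (i,a) = (A ^\<^sub>m Suc j * B) $$ (p,b) * h (e p) (i,a)"
          by simp
      qed
      finally show "h (Suc j, b) (i,a) = (\<Sum>p<N. (A ^\<^sub>m Suc j * B) $$ (p,b) * h (e p) (i,a))" .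
    qed
  qed
  have "T k = complex_of_real (1 / qfact q k) \<cdot>\<^sub>m (C * A ^\<^sub>m k * B)" for k
  proof (rule eq_matI)
    show "dim_row (T k) = dim_row (complex_of_real (1 / qfact q k) \<cdot>\<^sub>m (C * A ^\<^sub>m k * B))"
      using dims[of k] C by simp
    show "dim_col (T k) = dim_col (complex_of_real (1 / qfact q k) \<cdot>\<^sub>m (C * A ^\<^sub>m k * B))"
      using dims[of k] B by simp
    fix a b assume ab: "a < dim_row (complex_of_real (1 / qfact q k) \<cdot>\<^sub>m (C * A ^\<^sub>m k * B))"
      "b < dim_col (complex_of_real (1 / qfact q k) \<cdot>\<^sub>m (C * A ^\<^sub>m k * B))"
    then have a: "a < n" and b: "b < m" using C B by auto
    have e1: "C * A ^\<^sub>m k * B = C * (A ^\<^sub>m k * B)" using A B C by (metis assoc_mult_mat pow_carrier_mat)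
    have e2: "(C * (A ^\<^sub>m k * B)) $$ (a,b) = (\<Sum>p<N. C $$ (a,p) * (A ^\<^sub>m k * B) $$ (p,b))"
      by (rule mult_entry) (use A B C a b in auto)
    have "h (k,b) (0,a) = complex_of_real (qfact q k) * T k $$ (a,b)"
      using a by (simp add: h_def hcol_def)
    moreover have "h (k,b) (0,a) = (\<Sum>p<N. (A ^\<^sub>m k * B) $$ (p,b) * h (e p) (0,a))"
      using main[OF b, of k] by simp
    moreover have "(\<Sum>p<N. (A ^\<^sub>m k * B) $$ (p,b) * h (e p) (0,a)) = (C * A ^\<^sub>m k * B) $$ (a,b)"
      unfolding e1 e2 using a by (auto simp: C_def mult.commute intro!: sum.cong)
    ultimately have "(C * A ^\<^sub>m k * B) $$ (a,b) = complex_of_real (qfact q k) * T k $$ (a,b)" by simp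
    moreover have "complex_of_real (qfact q k) \<noteq> 0" using qfact_pos[OF q, of k] by simp
    ultimately have "T k $$ (a,b) = complex_of_real (1 / qfact q k) * (C * A ^\<^sub>m k * B) $$ (a,b)"
      by (simp add: field_simps)
    then show "T k $$ (a,b) = (complex_of_real (1 / qfact q k) \<cdot>\<^sub>m (C * A ^\<^sub>m k * B)) $$ (a,b)"
      using a b C B A by simp
  qed
  then show ?thesis using A B C by blast
qed




lemma powser_unique:
  fixes d :: "nat \<Rightarrow> complex"
  assumes s: "s > 0" and sm: "\<And>z. norm z < s \<Longrightarrow> (\<lambda>i. d i * z ^ i) sums 0"
  shows "d k = 0"
proof (induction k rule: less_induct)
  case (less k)
  have "(\<lambda>i. d (i + k) * z ^ i) sums 0" if z: "z \<noteq> 0" "norm z < s" for z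
  proof -
    have "(\<lambda>i. d (i + k) * z ^ (i + k)) sums 0"
      using sums_zero_iff_shift[of k "\<lambda>i. d i * z ^ i" 0] less sm[OF z(2)] by simp
    then have "(\<lambda>i. z ^ k * (d (i + k) * z ^ i)) sums 0"
      by (simp add: power_add mult_ac)
    from sums_mult_D[OF this] show ?thesis using z by simp
  qed
  from powser_limit_0_strong[OF s this]
  have "((\<lambda>_. 0) \<longlongrightarrow> d (0 + k)) (at (0::complex))" by blast
  then show ?case using LIM_const_eq by fastforce
qed

lemma Rq_sum:
  fixes c :: "nat \<Rightarrow> complex"
  assumes q: "0 \<le> q" "q < 1" and sm: "\<And>w. w \<in> ball 0 r \<Longrightarrow> summable (\<lambda>i. c i * w ^ i)"
    and w: "w \<in> ball 0 r"
  shows "summable (\<lambda>i. (c (Suc i) * complex_of_real (qint q (Suc i))) * w ^ i)"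
proof -
  define w' where "w' = complex_of_real ((norm w + r) / 2)"
  have nw: "norm w < r" using w by simp
  have nw': "norm w' = (norm w + r) / 2"
  proof -
    have "norm w' = \<bar>(norm w + r) / 2\<bar>" unfolding w'_def by (rule norm_of_real)
    moreover have "0 \<le> (norm w + r) / 2" using nw norm_ge_zero[of w] by (smt (verit) divide_nonneg_pos)
    ultimately show ?thesis by simp
  qed
  have "summable (\<lambda>n. diffs c n * w' ^ n)"
    by (rule termdiff_converges[of _ r]) (use nw nw' sm in auto)
  then have s1: "summable (\<lambda>n. norm (diffs c n * w ^ n))"
    by (rule powser_insidea) (use nw nw' in simp)
  show ?thesis
  proof (rule summable_comparison_test'[OF s1])
    fix i :: nat
    have "qint q (Suc i) \<le> real (Suc i)" by (rule qint_le) (use q in auto)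
    moreover have "0 \<le> qint q (Suc i)" by (rule qint_nonneg) (use q in auto)
    ultimately have "norm (complex_of_real (qint q (Suc i))) \<le> real (Suc i)" by simp
    then have "norm (c (Suc i)) * norm (complex_of_real (qint q (Suc i))) * norm w ^ i
        \<le> norm (c (Suc i)) * real (Suc i) * norm w ^ i"
      by (intro mult_right_mono mult_left_mono) auto
    then show "norm ((c (Suc i) * complex_of_real (qint q (Suc i))) * w ^ i) \<le> norm (diffs c i * w ^ i)"
    proof -
      have e: "norm (diffs c i * w ^ i) = norm (c (Suc i)) * real (Suc i) * norm w ^ i"
        by (simp only: diffs_def norm_mult norm_power norm_of_nat mult_ac)
      show ?thesis unfolding e using \<open>norm (c (Suc i)) * norm (complex_of_real (qint q (Suc i))) * norm w ^ i
        \<le> norm (c (Suc i)) * real (Suc i) * norm w ^ i\<close> by (simp only: norm_mult norm_power)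
    qed
  qed
qed

lemma Rq_powser:
  fixes c :: "nat \<Rightarrow> complex"
  assumes q: "0 \<le> q" "q < 1" and r: "r > 0"
    and sm: "\<And>w. w \<in> ball 0 r \<Longrightarrow> summable (\<lambda>i. c i * w ^ i)"
    and eq: "\<And>w. w \<in> ball 0 r \<Longrightarrow> g w = (\<Sum>i. c i * w ^ i)"
    and z: "z \<in> ball 0 r"
  shows "Rq q g z = (\<Sum>i. (c (Suc i) * complex_of_real (qint q (Suc i))) * z ^ i)"
proof (cases "z = 0")
  case True
  define K where "K = complex_of_real (r / 2)"
  have K: "K \<in> ball 0 r" "norm (0::complex) < norm K" unfolding K_def using r by auto
  have "((\<lambda>x. \<Sum>n. c n * x ^ n) has_field_derivative (\<Sum>n. diffs c n * 0 ^ n)) (at 0)"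
    by (rule termdiffs_strong[OF sm[OF K(1)] K(2)])
  then have "(g has_field_derivative (\<Sum>n. diffs c n * 0 ^ n)) (at 0)"
    by (rule has_field_derivative_transform_within_open[of _ _ _ "ball 0 r"]) (use r eq in auto)
  then have "deriv g 0 = c 1" by (simp add: DERIV_imp_deriv diffs_def)
  moreover have "qint q 1 = 1" by (simp add: qint_def)
  ultimately show ?thesis using True by (simp add: Rq_def)
next
  case False
  have q1: "complex_of_real (1 - q) \<noteq> 0" using q by simp
  have qz: "complex_of_real q * z \<in> ball 0 r"
  proof -
    have "norm (complex_of_real q * z) = q * norm z" using q by (simp add: norm_mult)
    also have "\<dots> \<le> norm z" using q by (simp add: mult_left_le_one_le)
    finally show ?thesis using z by simp
  qed
  define t where "t = (\<lambda>i. (c (Suc i) * complex_of_real (qint q (Suc i))) * z ^ i)"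
  have st: "summable t" unfolding t_def by (rule Rq_sum[OF q sm z])
  define f where "f i = c i * z ^ i - c i * (complex_of_real q * z) ^ i" for i
  have sf: "summable f" unfolding f_def by (intro summable_diff sm z qz)
  have gdiff: "g z - g (complex_of_real q * z) = suminf f"
    unfolding f_def eq[OF z] eq[OF qz] by (rule suminf_diff) (intro sm z qz)+
  have fSuc: "f (Suc i) = (complex_of_real (1 - q) * z) * t i" for i
  proof -
    have "f (Suc i) = c (Suc i) * z ^ Suc i * (1 - complex_of_real (q ^ Suc i))"
      unfolding f_def by (simp add: power_mult_distrib algebra_simps)
    also have "1 - complex_of_real (q ^ Suc i) = complex_of_real ((1 - q) * qint q (Suc i))"
      by (simp add: qint_mult)
    finally show ?thesis unfolding t_def by (simp add: mult_ac)
  qed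
  have "suminf f = (\<Sum>i. f (Suc i))" using suminf_split_head[OF sf] by (simp add: f_def)
  also have "\<dots> = (complex_of_real (1 - q) * z) * suminf t"
    unfolding fSuc by (rule suminf_mult[OF st])
  finally have "g z - g (complex_of_real q * z) = (complex_of_real (1 - q) * z) * suminf t"
    using gdiff by simp
  moreover have "complex_of_real (1 - q) * z \<noteq> 0" using False q1 by simp
  ultimately have "(g z - g (complex_of_real q * z)) / (complex_of_real (1 - q) * z) = suminf t"
    by simp
  then show ?thesis using False unfolding Rq_def t_def by simp
qed


definition co :: "real \<Rightarrow> (nat \<Rightarrow> complex mat) \<Rightarrow> nat \<Rightarrow> nat \<Rightarrow> nat \<Rightarrow> nat \<Rightarrow> complex" where
  "co q T k a b i = complex_of_real (qfact q (i + k) / qfact q i) * T (i + k) $$ (a, b)"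

lemma co_0: "0 \<le> q \<Longrightarrow> co q T 0 a b i = T i $$ (a,b)"
  using qfact_pos[of q i] by (simp add: co_def)

lemma co_Suc: "0 \<le> q \<Longrightarrow> co q T (Suc k) a b i = co q T k a b (Suc i) * complex_of_real (qint q (Suc i))"
proof -
  assume q: "0 \<le> q"
  have pos: "qint q (Suc i) \<noteq> 0" using qint_ge1[OF q, of "Suc i"] by simp
  have "qfact q (i + Suc k) / qfact q i = qfact q (Suc i + k) / qfact q (Suc i) * qint q (Suc i)"
    using pos qfact_pos[OF q, of i] by (simp add: qfact_Suc)
  then show ?thesis by (simp add: co_def mult_ac flip: of_real_mult)
qed

lemma co_hcol: "0 \<le> q \<Longrightarrow> a < n \<Longrightarrow> co q T k a b i = complex_of_real (1 / qfact q i) * hcol q n T (k,b) (i,a)"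
  by (simp add: co_def hcol_def divide_inverse mult_ac)

lemma co_summable:
  assumes q: "0 \<le> q" "q < 1"
    and conv: "\<And>z. z \<in> ball 0 r \<Longrightarrow> summable (\<lambda>k. T k $$ (a,b) * z ^ k)"
    and z: "z \<in> ball 0 r"
  shows "summable (\<lambda>i. co q T k a b i * z ^ i)"
  using z
proof (induction k arbitrary: z)
  case 0 then show ?case using conv by (simp add: co_0[OF q(1)])
next
  case (Suc k)
  show ?case unfolding co_Suc[OF q(1)] by (rule Rq_sum[OF q Suc.IH Suc.prems])
qed

lemma Rq_iter:
  assumes q: "0 \<le> q" "q < 1" and r: "r > 0"
    and conv: "\<And>z i j. z \<in> ball 0 r \<Longrightarrow> i < n \<Longrightarrow> j < m \<Longrightarrow>
                 summable (\<lambda>k. T k $$ (i,j) * z ^ k)"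
    and z: "z \<in> ball 0 r" and a: "a < n" and b: "b < m"
  shows "((RqM q n m ^^ k) (Tser n m T)) z $$ (a,b) = (\<Sum>i. co q T k a b i * z ^ i)"
  using z
proof (induction k arbitrary: z)
  case 0 then show ?case using a b by (simp add: Tser_def co_0[OF q(1)])
next
  case (Suc k)
  have "((RqM q n m ^^ Suc k) (Tser n m T)) z $$ (a,b) = Rq q (\<lambda>w. ((RqM q n m ^^ k) (Tser n m T)) w $$ (a,b)) z"
    using a b by (simp add: RqM_def)
  also have "\<dots> = (\<Sum>i. (co q T k a b (Suc i) * complex_of_real (qint q (Suc i))) * z ^ i)"
    by (rule Rq_powser[OF q r _ Suc.IH Suc.prems]) (rule co_summable[OF q conv], use a b in auto)
  finally show ?case by (simp add: co_Suc[OF q(1)])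
qed

definition wv :: "real \<Rightarrow> real \<Rightarrow> nat \<Rightarrow> (nat \<Rightarrow> complex mat) \<Rightarrow> nat \<times> nat \<Rightarrow> complex \<times> nat \<Rightarrow> complex" where
  "wv q r n T kb za = (if fst za \<in> ball 0 r \<and> snd za < n then (\<Sum>i. co q T (fst kb) (snd za) (snd kb) i * fst za ^ i) else 0)"

lemma P4_set:
  assumes q: "0 \<le> q" "q < 1" and r: "r > 0"
    and conv: "\<And>z i j. z \<in> ball 0 r \<Longrightarrow> i < n \<Longrightarrow> j < m \<Longrightarrow>
                 summable (\<lambda>k. T k $$ (i,j) * z ^ k)"
  shows "((\<lambda>(k,b). (\<lambda>(z,a). if z \<in> ball 0 r \<and> a < n
                                    then ((RqM q n m ^^ k) (Tser n m T)) z $$ (a,b) else 0))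
                 ` (UNIV \<times> {..<m})) = wv q r n T ` (UNIV \<times> {..<m})"
proof (rule image_cong[OF refl])
  fix kb assume "kb \<in> (UNIV \<times> {..<m} :: (nat \<times> nat) set)"
  then obtain k b where kb: "kb = (k,b)" "b < m" by auto
  show "(case kb of (k,b) \<Rightarrow> (\<lambda>(z,a). if z \<in> ball 0 r \<and> a < n
                                    then ((RqM q n m ^^ k) (Tser n m T)) z $$ (a,b) else 0)) = wv q r n T kb"
    unfolding kb prod.case
  proof (intro ext)
    fix x :: "complex \<times> nat"
    obtain zz aa where x: "x = (zz, aa)" by (cases x)
    show "(case x of (z,a) \<Rightarrow> if z \<in> ball 0 r \<and> a < n then ((RqM q n m ^^ k) (Tser n m T)) z $$ (a,b) else 0) = wv q r n T (k,b) x"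
    proof (cases "zz \<in> ball 0 r \<and> aa < n")
      case True
      then show ?thesis using Rq_iter[OF q r conv, where z=zz and a=aa and b=b and k=k] kb(2) x by (simp add: wv_def)
    next
      case False
      then show ?thesis by (auto simp: wv_def x)
    qed
  qed
qed

lemma P2_to_P4:
  assumes q: "0 \<le> q" "q < 1"
    and conv: "\<And>z i j. z \<in> ball 0 r \<Longrightarrow> i < n \<Longrightarrow> j < m \<Longrightarrow>
                 summable (\<lambda>k. T k $$ (i,j) * z ^ k)"
    and fd: "fin_dim_span (hcol q n T ` (UNIV \<times> {..<m}))"
  shows "fin_dim_span (wv q r n T ` (UNIV \<times> {..<m}))"
proof (rule fds_transfer[OF fd])
  fix J c i assume J: "finite J" "J \<subseteq> UNIV \<times> {..<m}" and i: "i \<in> UNIV \<times> {..<m}"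
    and eq: "hcol q n T i = (\<lambda>x. \<Sum>l\<in>J. c l * hcol q n T l x)"
  show "wv q r n T i = (\<lambda>y. \<Sum>l\<in>J. c l * wv q r n T l y)"
  proof (rule ext, clarify)
    fix z a
    show "wv q r n T i (z,a) = (\<Sum>l\<in>J. c l * wv q r n T l (z,a))"
    proof (cases "z \<in> ball 0 r \<and> a < n")
      case True
      have coeq: "co q T (fst i) a (snd i) j = (\<Sum>l\<in>J. c l * co q T (fst l) a (snd l) j)" for j
      proof -
        have a: "a < n" using True by simp
        have "hcol q n T i (j,a) = (\<Sum>l\<in>J. c l * hcol q n T l (j,a))" using eq by (rule fun_cong)
        moreover have "co q T (fst i) a (snd i) j = complex_of_real (1 / qfact q j) * hcol q n T i (j,a)"
          using co_hcol[OF q(1) a, of T "fst i" "snd i" j] by simp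
        moreover have "(\<Sum>l\<in>J. c l * co q T (fst l) a (snd l) j)
            = (\<Sum>l\<in>J. c l * (complex_of_real (1 / qfact q j) * hcol q n T l (j,a)))"
          by (rule sum.cong[OF refl]) (simp add: co_hcol[OF q(1) a])
        ultimately show ?thesis by (simp add: sum_distrib_left mult_ac)
      qed
      have sml: "summable (\<lambda>j. co q T (fst l) a (snd l) j * z ^ j)" if "l \<in> J" for l
        by (rule co_summable[OF q conv]) (use that J True in auto)
      have "(\<Sum>j. co q T (fst i) a (snd i) j * z ^ j) = (\<Sum>j. \<Sum>l\<in>J. c l * (co q T (fst l) a (snd l) j * z ^ j))"
        by (simp add: coeq sum_distrib_right sum_distrib_left mult_ac)
      also have "\<dots> = (\<Sum>l\<in>J. \<Sum>j. c l * (co q T (fst l) a (snd l) j * z ^ j))"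
        by (rule suminf_sum) (use sml in \<open>auto intro: summable_mult\<close>)
      also have "\<dots> = (\<Sum>l\<in>J. c l * (\<Sum>j. co q T (fst l) a (snd l) j * z ^ j))"
        by (rule sum.cong[OF refl]) (use sml in \<open>auto intro: suminf_mult\<close>)
      finally show ?thesis using True by (simp add: wv_def)
    qed (auto simp: wv_def)
  qed
qed

lemma P4_to_P2:
  assumes q: "0 \<le> q" "q < 1" and r: "r > 0"
    and conv: "\<And>z i j. z \<in> ball 0 r \<Longrightarrow> i < n \<Longrightarrow> j < m \<Longrightarrow>
                 summable (\<lambda>k. T k $$ (i,j) * z ^ k)"
    and fd: "fin_dim_span (wv q r n T ` (UNIV \<times> {..<m}))"
  shows "fin_dim_span (hcol q n T ` (UNIV \<times> {..<m}))"
proof (rule fds_transfer[OF fd])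
  fix J c i assume J: "finite J" "J \<subseteq> UNIV \<times> {..<m}" and i: "i \<in> UNIV \<times> {..<m}"
    and eq: "wv q r n T i = (\<lambda>x. \<Sum>l\<in>J. c l * wv q r n T l x)"
  show "hcol q n T i = (\<lambda>y. \<Sum>l\<in>J. c l * hcol q n T l y)"
  proof (rule ext, clarify)
    fix j a
    show "hcol q n T i (j,a) = (\<Sum>l\<in>J. c l * hcol q n T l (j,a))"
    proof (cases "a < n")
      case True
      define d where "d j = co q T (fst i) a (snd i) j - (\<Sum>l\<in>J. c l * co q T (fst l) a (snd l) j)" for j
      have "(\<lambda>j. d j * z ^ j) sums 0" if z: "norm z < r" for z
      proof -
        have zb: "z \<in> ball 0 r" using z by simp
        have sml: "summable (\<lambda>j. co q T (fst l) a (snd l) j * z ^ j)" if "l \<in> insert i J" for l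
          by (rule co_summable[OF q conv]) (use that J i True zb in auto)
        have s1: "(\<lambda>j. co q T (fst i) a (snd i) j * z ^ j) sums (\<Sum>j. co q T (fst i) a (snd i) j * z ^ j)"
          using sml by auto
        have s2: "(\<lambda>j. \<Sum>l\<in>J. c l * (co q T (fst l) a (snd l) j * z ^ j))
              sums (\<Sum>l\<in>J. c l * (\<Sum>j. co q T (fst l) a (snd l) j * z ^ j))"
          by (rule sums_sum, rule sums_mult) (use sml in auto)
        have "wv q r n T i (z,a) = (\<Sum>l\<in>J. c l * wv q r n T l (z,a))" using eq by (rule fun_cong)
        then have e: "(\<Sum>j. co q T (fst i) a (snd i) j * z ^ j) = (\<Sum>l\<in>J. c l * (\<Sum>j. co q T (fst l) a (snd l) j * z ^ j))"
          using True zb by (simp add: wv_def)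
        have "(\<lambda>j. co q T (fst i) a (snd i) j * z ^ j - (\<Sum>l\<in>J. c l * (co q T (fst l) a (snd l) j * z ^ j))) sums 0"
          using sums_diff[OF s1 s2] e by simp
        moreover have "(\<lambda>j. d j * z ^ j) = (\<lambda>j. co q T (fst i) a (snd i) j * z ^ j - (\<Sum>l\<in>J. c l * (co q T (fst l) a (snd l) j * z ^ j)))"
          by (rule ext) (simp add: d_def left_diff_distrib sum_distrib_right sum_distrib_left right_diff_distrib mult_ac)
        ultimately show ?thesis by simp
      qed
      then have "d j = 0" by (intro powser_unique[OF r])
      then have "co q T (fst i) a (snd i) j = (\<Sum>l\<in>J. c l * co q T (fst l) a (snd l) j)"
        by (simp add: d_def)
      then have "complex_of_real (1 / qfact q j) * hcol q n T (fst i, snd i) (j,a)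
             = complex_of_real (1 / qfact q j) * (\<Sum>l\<in>J. c l * hcol q n T (fst l, snd l) (j,a))"
        using True by (simp add: co_hcol[OF q(1)] sum_distrib_left mult_ac)
      moreover have "complex_of_real (1 / qfact q j) \<noteq> 0" using qfact_pos[OF q(1), of j] by simp
      ultimately show ?thesis by simp
    next
      case False
      have "hcol q n T l (j,a) = 0" for l using False by (cases l) (simp add: hcol_def)
      then show ?thesis by simp
    qed
  qed
qed




definition mn :: "complex mat \<Rightarrow> real" where
  "mn X = (\<Sum>p<dim_row X. \<Sum>l<dim_col X. norm (X $$ (p,l)))"

lemma mn_nonneg: "0 \<le> mn X"
  unfolding mn_def by (intro sum_nonneg) auto

lemma entry_le_mn: assumes "p < dim_row X" "l < dim_col X" shows "norm (X $$ (p,l)) \<le> mn X"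
proof -
  have "norm (X $$ (p,l)) \<le> (\<Sum>l<dim_col X. norm (X $$ (p,l)))"
    by (rule member_le_sum[where f="\<lambda>l. norm (X $$ (p,l))"]) (use assms in auto)
  also have "\<dots> \<le> mn X" unfolding mn_def
    by (rule member_le_sum[where f="\<lambda>p. \<Sum>l<dim_col X. norm (X $$ (p,l))"]) (use assms in \<open>auto intro: sum_nonneg\<close>)
  finally show ?thesis .
qed

lemma row_le_mn: assumes "s < dim_row X" shows "(\<Sum>l<dim_col X. norm (X $$ (s,l))) \<le> mn X"
  unfolding mn_def
  by (rule member_le_sum[where f="\<lambda>p. \<Sum>l<dim_col X. norm (X $$ (p,l))"]) (use assms in \<open>auto intro: sum_nonneg\<close>)

lemma mn_mult:
  assumes X: "X \<in> carrier_mat a b" and Y: "Y \<in> carrier_mat b c"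
  shows "mn (X * Y) \<le> mn X * mn Y"
proof -
  have dims: "dim_row (X * Y) = a" "dim_col (X * Y) = c" using X Y by auto
  have "mn (X * Y) = (\<Sum>p<a. \<Sum>l<c. norm (\<Sum>s<b. X $$ (p,s) * Y $$ (s,l)))"
    unfolding mn_def dims by (intro sum.cong refl arg_cong[where f=norm] mult_entry[OF X Y]) auto
  also have "\<dots> \<le> (\<Sum>p<a. \<Sum>l<c. \<Sum>s<b. norm (X $$ (p,s)) * norm (Y $$ (s,l)))"
    by (intro sum_mono order.trans[OF norm_sum]) (simp add: norm_mult)
  also have "\<dots> = (\<Sum>p<a. \<Sum>s<b. norm (X $$ (p,s)) * (\<Sum>l<c. norm (Y $$ (s,l))))"
    by (simp add: sum_distrib_left sum.swap[of _ "{..<c}"])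
  also have "\<dots> \<le> (\<Sum>p<a. \<Sum>s<b. norm (X $$ (p,s)) * mn Y)"
    by (intro sum_mono mult_left_mono) (use row_le_mn[of _ Y] Y in auto)
  also have "\<dots> = mn X * mn Y"
    unfolding mn_def using X by (simp add: sum_distrib_right)
  finally show ?thesis .
qed

lemma mn_add: assumes "X \<in> carrier_mat a b" "Y \<in> carrier_mat a b" shows "mn (X + Y) \<le> mn X + mn Y"
proof -
  have "mn (X + Y) = (\<Sum>p<a. \<Sum>l<b. norm (X $$ (p,l) + Y $$ (p,l)))"
    unfolding mn_def using assms by (auto intro!: sum.cong)
  also have "\<dots> \<le> (\<Sum>p<a. \<Sum>l<b. norm (X $$ (p,l)) + norm (Y $$ (p,l)))"
    by (intro sum_mono norm_triangle_ineq)
  also have "\<dots> = mn X + mn Y" unfolding mn_def using assms by (simp add: sum.distrib)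
  finally show ?thesis .
qed

lemma mn_uminus: "mn (- X) = mn X"
  unfolding mn_def by (auto intro!: sum.cong)

lemma mn_smult: "mn (c \<cdot>\<^sub>m X) = norm c * mn X"
  unfolding mn_def by (auto simp: norm_mult sum_distrib_left intro!: sum.cong)

lemma mn_one: "mn (1\<^sub>m N) = real N"
proof -
  have "mn (1\<^sub>m N) = (\<Sum>p<N. \<Sum>l<N. cmod (if p = l then (1::complex) else 0))"
    unfolding mn_def by (auto intro!: sum.cong)
  also have "\<dots> = (\<Sum>p<N. 1)"
  proof (rule sum.cong[OF refl])
    fix p assume p: "p \<in> {..<N}"
    have "(\<Sum>l<N. cmod (if p = l then (1::complex) else 0)) = (\<Sum>l<N. if p = l then 1 else 0)"
      by (rule sum.cong) auto
    also have "\<dots> = 1" using p by simp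
    finally show "(\<Sum>l<N. cmod (if p = l then (1::complex) else 0)) = 1" .
  qed
  finally show ?thesis by simp
qed

lemma mn_pow: assumes A: "A \<in> carrier_mat N N" shows "mn (A ^\<^sub>m k) \<le> real N * mn A ^ k"
proof (induction k)
  case 0 then show ?case using A by (simp add: mn_one)
next
  case (Suc k)
  have "mn (A ^\<^sub>m Suc k) \<le> mn (A ^\<^sub>m k) * mn A" using A by (simp add: mn_mult[of _ N N _ N])
  also have "\<dots> \<le> real N * mn A ^ k * mn A" by (rule mult_right_mono[OF Suc mn_nonneg])
  finally show ?case by (simp add: mult_ac)
qed

definition msum :: "nat \<Rightarrow> nat \<Rightarrow> (nat \<Rightarrow> complex mat) \<Rightarrow> complex mat" where
  "msum nr nc f = mat nr nc (\<lambda>(p,l). \<Sum>k. f k $$ (p,l))"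

definition msummable :: "nat \<Rightarrow> nat \<Rightarrow> (nat \<Rightarrow> complex mat) \<Rightarrow> bool" where
  "msummable nr nc f \<longleftrightarrow> (\<forall>p<nr. \<forall>l<nc. summable (\<lambda>k. f k $$ (p,l)))"

lemma msum_carrier[simp]: "msum nr nc f \<in> carrier_mat nr nc"
  by (simp add: msum_def)

lemma msum_dims[simp]: "dim_row (msum nr nc f) = nr" "dim_col (msum nr nc f) = nc"
  by (simp_all add: msum_def)

lemma msum_index: "p < nr \<Longrightarrow> l < nc \<Longrightarrow> msum nr nc f $$ (p,l) = (\<Sum>k. f k $$ (p,l))"
  by (simp add: msum_def)

lemma msummable_mn:
  assumes "\<And>k. f k \<in> carrier_mat nr nc" "summable (\<lambda>k. mn (f k))"
  shows "msummable nr nc f"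
  unfolding msummable_def
proof (intro allI impI)
  fix p l assume "p < nr" "l < nc"
  then show "summable (\<lambda>k. f k $$ (p,l))"
    by (intro summable_comparison_test'[OF assms(2)] entry_le_mn) (auto simp: carrier_matD[OF assms(1)])
qed

lemma msum_left:
  assumes X: "X \<in> carrier_mat a nr" and f: "\<And>k. f k \<in> carrier_mat nr nc" and s: "msummable nr nc f"
  shows "msummable a nc (\<lambda>k. X * f k)" "X * msum nr nc f = msum a nc (\<lambda>k. X * f k)"
proof -
  have e: "(X * f k) $$ (p,l) = (\<Sum>s<nr. X $$ (p,s) * f k $$ (s,l))" if "p < a" "l < nc" for p l k
    by (rule mult_entry[OF X f that])
  show "msummable a nc (\<lambda>k. X * f k)" unfolding msummable_def
    using s by (auto simp: e msummable_def intro!: summable_sum summable_mult)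
  show "X * msum nr nc f = msum a nc (\<lambda>k. X * f k)"
  proof (rule eq_matI)
    fix p l assume pl: "p < dim_row (msum a nc (\<lambda>k. X * f k))" "l < dim_col (msum a nc (\<lambda>k. X * f k))"
    then have p: "p < a" and l: "l < nc" by auto
    have "(X * msum nr nc f) $$ (p,l) = (\<Sum>s<nr. X $$ (p,s) * (\<Sum>k. f k $$ (s,l)))"
      using mult_entry[OF X msum_carrier p l] by (simp add: msum_index l)
    also have "\<dots> = (\<Sum>s<nr. \<Sum>k. X $$ (p,s) * f k $$ (s,l))"
      using s l by (auto simp: msummable_def intro!: sum.cong suminf_mult[symmetric])
    also have "\<dots> = (\<Sum>k. \<Sum>s<nr. X $$ (p,s) * f k $$ (s,l))"
      using s l by (intro suminf_sum[symmetric]) (auto simp: msummable_def intro!: summable_mult)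
    also have "\<dots> = msum a nc (\<lambda>k. X * f k) $$ (p,l)"
      by (simp add: msum_index p l e)
    finally show "(X * msum nr nc f) $$ (p,l) = msum a nc (\<lambda>k. X * f k) $$ (p,l)" .
  qed (use X in auto)
qed

lemma msum_right:
  assumes X: "X \<in> carrier_mat nc c" and f: "\<And>k. f k \<in> carrier_mat nr nc" and s: "msummable nr nc f"
  shows "msummable nr c (\<lambda>k. f k * X)" "msum nr nc f * X = msum nr c (\<lambda>k. f k * X)"
proof -
  have e: "(f k * X) $$ (p,l) = (\<Sum>s<nc. f k $$ (p,s) * X $$ (s,l))" if "p < nr" "l < c" for p l k
    by (rule mult_entry[OF f X that])
  show "msummable nr c (\<lambda>k. f k * X)" unfolding msummable_def
    using s by (auto simp: e msummable_def intro!: summable_sum summable_mult2)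
  show "msum nr nc f * X = msum nr c (\<lambda>k. f k * X)"
  proof (rule eq_matI)
    fix p l assume pl: "p < dim_row (msum nr c (\<lambda>k. f k * X))" "l < dim_col (msum nr c (\<lambda>k. f k * X))"
    then have p: "p < nr" and l: "l < c" by auto
    have "(msum nr nc f * X) $$ (p,l) = (\<Sum>s<nc. (\<Sum>k. f k $$ (p,s)) * X $$ (s,l))"
      using mult_entry[OF msum_carrier X p l] by (simp add: msum_index p)
    also have "\<dots> = (\<Sum>s<nc. \<Sum>k. f k $$ (p,s) * X $$ (s,l))"
      using s p by (auto simp: msummable_def intro!: sum.cong suminf_mult2)
    also have "\<dots> = (\<Sum>k. \<Sum>s<nc. f k $$ (p,s) * X $$ (s,l))"
      using s p by (intro suminf_sum[symmetric]) (auto simp: msummable_def intro!: summable_mult2)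
    also have "\<dots> = msum nr c (\<lambda>k. f k * X) $$ (p,l)"
      by (simp add: msum_index p l e)
    finally show "(msum nr nc f * X) $$ (p,l) = msum nr c (\<lambda>k. f k * X) $$ (p,l)" .
  qed (use X in auto)
qed

lemma msum_diff:
  assumes f: "\<And>k. f k \<in> carrier_mat nr nc" and g: "\<And>k. g k \<in> carrier_mat nr nc"
    and sf: "msummable nr nc f" and sg: "msummable nr nc g"
  shows "msum nr nc f - msum nr nc g = msum nr nc (\<lambda>k. f k - g k)"
  by (rule eq_matI) (use f g sf sg in \<open>auto simp: msum_index msummable_def suminf_diff carrier_matD[OF f] carrier_matD[OF g]\<close>)

lemma msum_shift:
  assumes f: "\<And>k. f k \<in> carrier_mat nr nc" and sf: "msummable nr nc f"
  shows "msum nr nc f = f 0 + msum nr nc (\<lambda>k. f (Suc k))"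
proof (rule eq_matI)
  fix p l assume "p < dim_row (f 0 + msum nr nc (\<lambda>k. f (Suc k)))" "l < dim_col (f 0 + msum nr nc (\<lambda>k. f (Suc k)))"
  then have p: "p < nr" and l: "l < nc" by auto
  have "summable (\<lambda>k. f k $$ (p,l))" using sf p l by (simp add: msummable_def)
  from suminf_split_head[OF this] show "msum nr nc f $$ (p,l) = (f 0 + msum nr nc (\<lambda>k. f (Suc k))) $$ (p,l)"
    using p l f[of 0] by (simp add: msum_index)
qed (use f in auto)

lemma msum_cong: "(\<And>k. f k = g k) \<Longrightarrow> msum nr nc f = msum nr nc g"
  by metis

lemma mn_msum_le:
  assumes f: "\<And>k. f k \<in> carrier_mat nr nc" and s: "summable (\<lambda>k. mn (f k))"
  shows "mn (msum nr nc f) \<le> (\<Sum>k. mn (f k))"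
proof -
  have sn: "summable (\<lambda>k. norm (f k $$ (p,l)))" if "p < nr" "l < nc" for p l
  proof -
    have "norm (f k $$ (p,l)) \<le> mn (f k)" for k by (rule entry_le_mn) (auto simp: carrier_matD[OF f] that)
    then show ?thesis by (intro summable_comparison_test'[OF s]) simp
  qed
  have "mn (msum nr nc f) = (\<Sum>p<nr. \<Sum>l<nc. norm (\<Sum>k. f k $$ (p,l)))"
    unfolding mn_def by (auto simp: msum_index intro!: sum.cong)
  also have "\<dots> \<le> (\<Sum>p<nr. \<Sum>l<nc. \<Sum>k. norm (f k $$ (p,l)))"
    by (intro sum_mono summable_norm sn) auto
  also have "\<dots> = (\<Sum>k. \<Sum>p<nr. \<Sum>l<nc. norm (f k $$ (p,l)))"
    proof -
    have "(\<Sum>p<nr. \<Sum>l<nc. \<Sum>k. norm (f k $$ (p,l))) = (\<Sum>p<nr. \<Sum>k. \<Sum>l<nc. norm (f k $$ (p,l)))"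
      by (rule sum.cong[OF refl], rule suminf_sum[symmetric]) (use sn in auto)
    also have "\<dots> = (\<Sum>k. \<Sum>p<nr. \<Sum>l<nc. norm (f k $$ (p,l)))"
      by (rule suminf_sum[symmetric]) (use sn in \<open>auto intro!: summable_sum\<close>)
    finally show ?thesis .
  qed
  also have "\<dots> = (\<Sum>k. mn (f k))"
    unfolding mn_def by (simp add: carrier_matD[OF f])
  finally show ?thesis .
qed




lemma geom_summable_mn:
  assumes "\<And>k. mn (f k) \<le> real N * t ^ k" "0 \<le> t" "t < 1"
  shows "summable (\<lambda>k. mn (f k))"
proof (rule summable_comparison_test'[of "\<lambda>k. real N * t ^ k"])
  show "summable (\<lambda>k. real N * t ^ k)" using assms by (intro summable_mult summable_geometric) auto
  show "norm (mn (f k)) \<le> real N * t ^ k" for k using assms(1)[of k] mn_nonneg[of "f k"] by simp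
qed

lemma msummable_Suc: "msummable nr nc f \<Longrightarrow> msummable nr nc (\<lambda>k. f (Suc k))"
  unfolding msummable_def
proof (intro allI impI)
  fix p l assume "\<forall>p<nr. \<forall>l<nc. summable (\<lambda>k. f k $$ (p, l))" "p < nr" "l < nc"
  then have "summable (\<lambda>k. f k $$ (p, l))" by blast
  then show "summable (\<lambda>k. f (Suc k) $$ (p, l))" using summable_Suc_iff[of "\<lambda>k. f k $$ (p,l)"] by simp
qed

lemma neumann_inv:
  assumes X: "X \<in> carrier_mat N N" and small: "mn X < 1"
  shows "invertible_mat (1\<^sub>m N - X)"
proof -
  define f where "f k = X ^\<^sub>m k" for k
  have fc: "f k \<in> carrier_mat N N" for k unfolding f_def using X by simp
  have sm: "summable (\<lambda>k. mn (f k))"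
    by (rule geom_summable_mn[of _ N "mn X"]) (use mn_pow[OF X] small mn_nonneg in \<open>auto simp: f_def\<close>)
  have ms: "msummable N N f" by (rule msummable_mn[OF fc sm])
  define S where "S = msum N N f"
  have Sc: "S \<in> carrier_mat N N" unfolding S_def by simp
  have fSc: "f (Suc k) \<in> carrier_mat N N" for k using fc .
  have msS: "msummable N N (\<lambda>k. f (Suc k))"
    using ms by (rule msummable_Suc)
  have XS: "X * S = msum N N (\<lambda>k. f (Suc k))"
    unfolding S_def msum_left(2)[OF X fc ms] f_def by (simp add: pow_mat_Suc_left[OF X])
  have SX: "S * X = msum N N (\<lambda>k. f (Suc k))"
    unfolding S_def msum_right(2)[OF X fc ms] f_def by simp
  have Sshift: "S = 1\<^sub>m N + msum N N (\<lambda>k. f (Suc k))"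
    unfolding S_def using msum_shift[OF fc ms] X by (simp add: f_def)
  have SM: "S - msum N N (\<lambda>k. f (Suc k)) = 1\<^sub>m N"
    unfolding Sshift by (rule eq_matI) auto
  have "(1\<^sub>m N - X) * S = 1\<^sub>m N * S - X * S"
    by (rule minus_mult_distrib_mat[OF one_carrier_mat X Sc])
  also have "\<dots> = 1\<^sub>m N" unfolding XS using SM Sc by simp
  finally have r1: "(1\<^sub>m N - X) * S = 1\<^sub>m N" .
  have "S * (1\<^sub>m N - X) = S * 1\<^sub>m N - S * X"
    by (rule mult_minus_distrib_mat[OF Sc one_carrier_mat X])
  also have "\<dots> = 1\<^sub>m N" unfolding SX using SM Sc by simp
  finally have r2: "S * (1\<^sub>m N - X) = 1\<^sub>m N" .
  show ?thesis unfolding invertible_mat_def inverts_mat_def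
    using r1 r2 Sc X by (intro conjI exI[of _ S]) (auto simp: square_mat.simps)
qed


lemma minv_props:
  assumes inv: "invertible_mat M" and Mc: "M \<in> carrier_mat N N"
  shows "minv M \<in> carrier_mat N N" "M * minv M = 1\<^sub>m N" "minv M * M = 1\<^sub>m N"
proof -
  have ex: "\<exists>B. inverts_mat M B \<and> inverts_mat B M" using inv unfolding invertible_mat_def by blast
  have h: "inverts_mat M (minv M) \<and> inverts_mat (minv M) M"
    unfolding minv_def by (rule someI_ex[OF ex])
  then have h1: "M * minv M = 1\<^sub>m N" and h2: "minv M * M = 1\<^sub>m (dim_row (minv M))"
    using Mc unfolding inverts_mat_def by auto
  have c1: "dim_col (minv M) = N" using arg_cong[OF h1, of dim_col] by simp
  have c2: "dim_row (minv M) = N" using arg_cong[OF h2, of dim_col] Mc by simp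
  show "minv M \<in> carrier_mat N N" using c1 c2 by auto
  show "M * minv M = 1\<^sub>m N" by (rule h1)
  show "minv M * M = 1\<^sub>m N" using h2 c2 by simp
qed

definition ecoef :: "real \<Rightarrow> complex mat \<Rightarrow> complex \<Rightarrow> nat \<Rightarrow> complex mat" where
  "ecoef q A w k = (complex_of_real (1 / qfact q k) * w ^ k) \<cdot>\<^sub>m (A ^\<^sub>m k)"

definition Eq :: "real \<Rightarrow> complex mat \<Rightarrow> complex \<Rightarrow> complex mat" where
  "Eq q A w = msum (dim_row A) (dim_row A) (ecoef q A w)"

lemma ecoef_carrier: "A \<in> carrier_mat N N \<Longrightarrow> ecoef q A w k \<in> carrier_mat N N"
  by (simp add: ecoef_def)

lemma smult_smult_mat: "a \<cdot>\<^sub>m (b \<cdot>\<^sub>m X) = (a * b :: complex) \<cdot>\<^sub>m X"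
  by (rule eq_matI) auto

lemma norm_scal_le:
  assumes "norm (c::complex) \<le> 1" shows "norm (c * w ^ k) \<le> norm w ^ k"
proof -
  have "norm (c * w ^ k) = norm c * norm w ^ k" by (simp only: norm_mult norm_power)
  also have "\<dots> \<le> 1 * norm w ^ k" by (rule mult_right_mono) (use assms in auto)
  finally show ?thesis by simp
qed

lemma mn_ecoef:
  assumes A: "A \<in> carrier_mat N N" and q: "0 \<le> q"
  shows "mn (ecoef q A w k) \<le> real N * (norm w * mn A) ^ k"
proof -
  have "\<bar>1 / qfact q k\<bar> \<le> 1"
    using qfact_ge1[OF q, of k] by (simp add: divide_le_eq_1_pos)
  then have "norm (complex_of_real (1 / qfact q k)) \<le> 1"
    unfolding norm_of_real .
  then have "norm (complex_of_real (1 / qfact q k) * w ^ k) \<le> norm w ^ k"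
    by (rule norm_scal_le)
  moreover have "mn (A ^\<^sub>m k) \<le> real N * mn A ^ k" by (rule mn_pow[OF A])
  ultimately have "norm (complex_of_real (1 / qfact q k) * w ^ k) * mn (A ^\<^sub>m k) \<le> norm w ^ k * (real N * mn A ^ k)"
    by (intro mult_mono) (auto simp: mn_nonneg)
  then show ?thesis by (simp add: ecoef_def mn_smult power_mult_distrib mult_ac)
qed

lemma ecoef_summable:
  assumes A: "A \<in> carrier_mat N N" and q: "0 \<le> q" and w: "norm w * mn A < 1"
  shows "summable (\<lambda>k. mn (ecoef q A w k))" "msummable N N (ecoef q A w)"
proof -
  show s: "summable (\<lambda>k. mn (ecoef q A w k))"
    by (rule geom_summable_mn[OF mn_ecoef[OF A q]]) (use w in \<open>auto intro: mult_nonneg_nonneg mn_nonneg\<close>)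
  show "msummable N N (ecoef q A w)" by (rule msummable_mn[OF ecoef_carrier[OF A] s])
qed

lemma Eq_carrier: "A \<in> carrier_mat N N \<Longrightarrow> Eq q A w \<in> carrier_mat N N"
  by (simp add: Eq_def)

lemma qscal:
  assumes q: "0 \<le> q"
  shows "complex_of_real (1 - q) * w * (complex_of_real (1 / qfact q k) * w ^ k)
       = complex_of_real ((1 - q ^ Suc k) / qfact q (Suc k)) * w ^ Suc k"
proof -
  have qi: "qint q (Suc k) \<noteq> 0" using qint_ge1[OF q, of "Suc k"] by simp
  have qf: "qfact q k \<noteq> 0" using qfact_pos[OF q, of k] by simp
  have e: "(1 - q ^ Suc k) / qfact q (Suc k) = (1 - q) / qfact q k"
    unfolding qint_mult[symmetric] qfact_Suc using qi qf by simp
  have qf': "complex_of_real (qfact q k) \<noteq> 0" using qf by simp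
  show ?thesis unfolding e using qf' by (simp add: field_simps)
qed

lemma E_identity:
  assumes A: "A \<in> carrier_mat N N" and q: "0 \<le> q" "q < 1" and w: "norm w * mn A < 1"
  shows "(1\<^sub>m N - (complex_of_real (1 - q) * w) \<cdot>\<^sub>m A) * Eq q A w = Eq q A (complex_of_real q * w)"
proof -
  define c where "c = complex_of_real (1 - q) * w"
  define X where "X = c \<cdot>\<^sub>m A"
  have Xc: "X \<in> carrier_mat N N" unfolding X_def using A by simp
  have dA: "dim_row A = N" using A by simp
  define E where "E = Eq q A w"
  have Ec: "E \<in> carrier_mat N N" unfolding E_def using Eq_carrier[OF A] .
  have ec: "\<And>k. ecoef q A w k \<in> carrier_mat N N" by (rule ecoef_carrier[OF A])
  have es: "msummable N N (ecoef q A w)" by (rule ecoef_summable(2)[OF A q(1) w])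
  define g where "g j = (complex_of_real ((1 - q ^ j) / qfact q j) * w ^ j) \<cdot>\<^sub>m (A ^\<^sub>m j)" for j
  have gc: "g j \<in> carrier_mat N N" for j unfolding g_def using A by simp
  have mng: "mn (g j) \<le> real N * (norm w * mn A) ^ j" for j
  proof -
    have "0 \<le> 1 - q ^ j" "1 - q ^ j \<le> 1" using q by (auto simp: power_le_one)
    moreover have "1 \<le> qfact q j" by (rule qfact_ge1[OF q(1)])
    ultimately have "\<bar>(1 - q ^ j) / qfact q j\<bar> \<le> 1"
      by (simp add: divide_le_eq_1_pos divide_nonneg_pos)
    then have "norm (complex_of_real ((1 - q ^ j) / qfact q j)) \<le> 1"
      unfolding norm_of_real .
    then have "norm (complex_of_real ((1 - q ^ j) / qfact q j) * w ^ j) \<le> norm w ^ j"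
      by (rule norm_scal_le)
    moreover have "mn (A ^\<^sub>m j) \<le> real N * mn A ^ j" by (rule mn_pow[OF A])
    ultimately have "norm (complex_of_real ((1 - q ^ j) / qfact q j) * w ^ j) * mn (A ^\<^sub>m j) \<le> norm w ^ j * (real N * mn A ^ j)"
      by (intro mult_mono) (auto simp: mn_nonneg)
    then show ?thesis by (simp add: g_def mn_smult power_mult_distrib mult_ac)
  qed
  have gs: "msummable N N g"
    by (rule msummable_mn[OF gc geom_summable_mn[OF mng]]) (use w in \<open>auto intro: mult_nonneg_nonneg mn_nonneg\<close>)
  have Xe: "X * ecoef q A w k = g (Suc k)" for k
  proof -
    have "X * ecoef q A w k = (c * (complex_of_real (1 / qfact q k) * w ^ k)) \<cdot>\<^sub>m (A * A ^\<^sub>m k)"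
      unfolding X_def ecoef_def using A
      by (simp add: mult_smult_distrib[of _ N N _ N] mult_smult_assoc_mat[of _ N N _ N] smult_smult_mat mult.commute)
    also have "\<dots> = g (Suc k)" unfolding g_def c_def qscal[OF q(1)] pow_mat_Suc_left[OF A] by simp
    finally show ?thesis .
  qed
  have "X * E = msum N N (\<lambda>k. X * ecoef q A w k)"
    unfolding E_def Eq_def dA by (rule msum_left(2)[OF Xc ec es])
  also have "\<dots> = msum N N (\<lambda>k. g (Suc k))" unfolding Xe ..
  also have "\<dots> = msum N N g"
  proof -
    have "g 0 = 0\<^sub>m N N" unfolding g_def by (rule eq_matI) (use A in auto)
    then show ?thesis using msum_shift[OF gc gs] by simp
  qed
  finally have XE: "X * E = msum N N g" .
  have "(1\<^sub>m N - X) * E = 1\<^sub>m N * E - X * E"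
    by (rule minus_mult_distrib_mat[OF one_carrier_mat Xc Ec])
  also have "\<dots> = E - msum N N g" using Ec XE by simp
  also have "\<dots> = msum N N (\<lambda>k. ecoef q A w k - g k)"
    unfolding E_def Eq_def dA by (rule msum_diff[OF ec gc es gs])
  also have "\<dots> = msum N N (ecoef q A (complex_of_real q * w))"
  proof (rule msum_cong)
    fix k
    show "ecoef q A w k - g k = ecoef q A (complex_of_real q * w) k"
    proof (rule eq_matI)
      fix i j assume "i < dim_row (ecoef q A (complex_of_real q * w) k)" "j < dim_col (ecoef q A (complex_of_real q * w) k)"
      then have ij: "i < N" "j < N" using A by (auto simp: ecoef_def split: if_splits)
      have "complex_of_real (1 / qfact q k) * w ^ k - complex_of_real ((1 - q ^ k) / qfact q k) * w ^ k
          = complex_of_real (1 / qfact q k) * (complex_of_real q * w) ^ k"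
        using qfact_pos[OF q(1), of k] by (simp add: field_simps power_mult_distrib)
      then show "(ecoef q A w k - g k) $$ (i,j) = ecoef q A (complex_of_real q * w) k $$ (i,j)"
        using ij A by (simp add: ecoef_def g_def algebra_simps)
    qed (use A in \<open>auto simp: ecoef_def g_def\<close>)
  qed
  also have "\<dots> = Eq q A (complex_of_real q * w)" unfolding Eq_def dA ..
  finally show ?thesis unfolding X_def c_def E_def .
qed




lemma ecoef_0: "A \<in> carrier_mat N N \<Longrightarrow> ecoef q A w 0 = 1\<^sub>m N"
  by (rule eq_matI) (auto simp: ecoef_def)

lemma D_bound:
  assumes A: "A \<in> carrier_mat N N" and q: "0 \<le> q" and w: "norm w * mn A < 1"
  shows "Eq q A w = 1\<^sub>m N + msum N N (\<lambda>k. ecoef q A w (Suc k))"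
    "mn (msum N N (\<lambda>k. ecoef q A w (Suc k))) \<le> real N * (norm w * mn A) / (1 - norm w * mn A)"
proof -
  have dA: "dim_row A = N" using A by simp
  show "Eq q A w = 1\<^sub>m N + msum N N (\<lambda>k. ecoef q A w (Suc k))"
    unfolding Eq_def dA using msum_shift[OF ecoef_carrier[OF A] ecoef_summable(2)[OF A q w]] ecoef_0[OF A] by simp
  define t where "t = norm w * mn A"
  have t: "0 \<le> t" "t < 1" unfolding t_def using w by (auto intro: mult_nonneg_nonneg mn_nonneg)
  have s1: "summable (\<lambda>k. mn (ecoef q A w (Suc k)))"
    using ecoef_summable(1)[OF A q w] summable_Suc_iff[of "\<lambda>k. mn (ecoef q A w k)"] by simp
  have sg: "summable (\<lambda>k. real N * t ^ Suc k)" using t by (intro summable_mult summable_geometric) auto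
  have "mn (msum N N (\<lambda>k. ecoef q A w (Suc k))) \<le> (\<Sum>k. mn (ecoef q A w (Suc k)))"
    by (rule mn_msum_le[OF ecoef_carrier[OF A] s1])
  also have "\<dots> \<le> (\<Sum>k. real N * t ^ Suc k)"
  proof (rule suminf_le[OF _ s1 sg])
    fix k show "mn (ecoef q A w (Suc k)) \<le> real N * t ^ Suc k"
      using mn_ecoef[OF A q, of w "Suc k"] by (simp only: t_def)
  qed
  also have "\<dots> = real N * t * (\<Sum>k. t ^ k)"
    using suminf_mult[of "\<lambda>k. t ^ k" "real N * t"] t by (simp add: mult_ac)
  also have "\<dots> = real N * t / (1 - t)" using t by (simp add: suminf_geometric)
  finally show "mn (msum N N (\<lambda>k. ecoef q A w (Suc k))) \<le> real N * (norm w * mn A) / (1 - norm w * mn A)"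
    unfolding t_def .
qed

lemma prod_limit:
  assumes A: "A \<in> carrier_mat N N" and q: "0 \<le> q" "q < 1" and z: "norm z * mn A < 1"
    and inv: "\<And>j. invertible_mat (1\<^sub>m N - (complex_of_real ((1 - q) * q ^ j) * z) \<cdot>\<^sub>m A)"
  shows "qprod_part q A z J \<in> carrier_mat N N"
    "p < N \<Longrightarrow> l < N \<Longrightarrow> (\<lambda>J. qprod_part q A z J $$ (p,l)) \<longlonglongrightarrow> Eq q A z $$ (p,l)"
proof -
  have dA: "dim_row A = N" using A by simp
  define M where "M j = 1\<^sub>m N - (complex_of_real ((1 - q) * q ^ j) * z) \<cdot>\<^sub>m A" for j
  have Mc: "M j \<in> carrier_mat N N" for j unfolding M_def using A by (intro minus_carrier_mat smult_carrier_mat)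
  define w where "w j = complex_of_real (q ^ j) * z" for j
  have nw: "norm (w j) = q ^ j * norm z" for j
  proof -
    have "norm (w j) = norm (complex_of_real (q ^ j)) * norm z" unfolding w_def by (rule norm_mult)
    also have "norm (complex_of_real (q ^ j)) = q ^ j" unfolding norm_of_real using q by simp
    finally show ?thesis .
  qed
  have ws: "norm (w j) * mn A < 1" for j
  proof -
    have "norm (w j) * mn A \<le> norm z * mn A"
      unfolding nw by (intro mult_right_mono mult_left_le_one_le) (use q in \<open>auto simp: power_le_one mn_nonneg\<close>)
    then show ?thesis using z by simp
  qed
  have Mw: "M j = 1\<^sub>m N - (complex_of_real (1 - q) * w j) \<cdot>\<^sub>m A" for j
    unfolding M_def w_def by (simp add: mult_ac)
  have wS: "complex_of_real q * w j = w (Suc j)" for j unfolding w_def by (simp add: mult_ac)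
  have w0: "w 0 = z" unfolding w_def by simp
  have ME: "M j * Eq q A (w j) = Eq q A (w (Suc j))" for j
    unfolding Mw wS[symmetric] by (rule E_identity[OF A q ws])
  have mi: "minv (M j) \<in> carrier_mat N N" "minv (M j) * M j = 1\<^sub>m N" for j
    using minv_props[OF inv[folded M_def] Mc] by auto
  have PS: "qprod_part q A z (Suc J) = qprod_part q A z J * minv (M J)" for J
    by (simp add: M_def dA)
  have Pc: "qprod_part q A z J \<in> carrier_mat N N" for J
  proof (induction J)
    case 0 then show ?case by (simp add: dA)
  next
    case (Suc J) then show ?case unfolding PS using mi(1) by simp
  qed
  then show "qprod_part q A z J \<in> carrier_mat N N" .
  have Ec: "Eq q A u \<in> carrier_mat N N" for u by (rule Eq_carrier[OF A])
  have key: "Eq q A z = qprod_part q A z J * Eq q A (w J)" for J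
  proof (induction J)
    case 0 then show ?case using left_mult_one_mat[OF Ec[of z]] by (simp add: dA w0)
  next
    case (Suc J)
    have "qprod_part q A z (Suc J) * Eq q A (w (Suc J))
        = qprod_part q A z J * (minv (M J) * (M J * Eq q A (w J)))"
      unfolding PS ME using Pc mi(1) Ec by (metis assoc_mult_mat)
    also have "\<dots> = qprod_part q A z J * ((minv (M J) * M J) * Eq q A (w J))"
      using mi(1) Mc Ec by (metis assoc_mult_mat)
    also have "\<dots> = qprod_part q A z J * Eq q A (w J)" using mi(2) left_mult_one_mat[OF Ec[of "w J"]] by simp
    finally show ?case using Suc by simp
  qed
  define t0 where "t0 = norm z * mn A"
  have t0: "0 \<le> t0" "t0 < 1" unfolding t0_def using z by (auto intro: mult_nonneg_nonneg mn_nonneg)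
  define \<gamma> where "\<gamma> = real N * t0 / (1 - t0)"
  have \<gamma>: "0 \<le> \<gamma>" unfolding \<gamma>_def using t0 by (auto intro!: divide_nonneg_pos)
  define D where "D J = msum N N (\<lambda>k. ecoef q A (w J) (Suc k))" for J
  have Dc: "D J \<in> carrier_mat N N" for J unfolding D_def by simp
  have ED: "Eq q A (w J) = 1\<^sub>m N + D J" for J unfolding D_def by (rule D_bound(1)[OF A q(1) ws])
  have mnD: "mn (D J) \<le> \<gamma> * q ^ J" for J
  proof -
    have tJ: "norm (w J) * mn A = q ^ J * t0" unfolding nw t0_def by (simp add: mult_ac)
    have qJ: "0 \<le> q ^ J" "q ^ J \<le> 1" using q by (auto simp: power_le_one)
    have "mn (D J) \<le> real N * (q ^ J * t0) / (1 - q ^ J * t0)"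
      unfolding D_def tJ[symmetric] by (rule D_bound(2)[OF A q(1) ws])
    also have "\<dots> \<le> real N * (q ^ J * t0) / (1 - t0)"
    proof (rule divide_left_mono)
      show "1 - t0 \<le> 1 - q ^ J * t0" using qJ t0 by (simp add: mult_left_le_one_le)
      show "0 \<le> real N * (q ^ J * t0)" using qJ t0 by simp
      show "0 < (1 - q ^ J * t0) * (1 - t0)" using qJ t0
        by (intro mult_pos_pos) (auto simp: mult_left_le_one_le order.strict_trans1[of _ t0 1])
    qed
    also have "\<dots> = \<gamma> * q ^ J" unfolding \<gamma>_def by (simp add: mult_ac)
    finally show ?thesis .
  qed
  have entry: "Eq q A z $$ (a,b) = qprod_part q A z J $$ (a,b) + (qprod_part q A z J * D J) $$ (a,b)"
    if "a < N" "b < N" for J a b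
  proof -
    have "Eq q A z = qprod_part q A z J * (1\<^sub>m N + D J)" using key ED by simp
    also have "\<dots> = qprod_part q A z J * 1\<^sub>m N + qprod_part q A z J * D J"
      by (rule mult_add_distrib_mat[OF Pc one_carrier_mat Dc])
    finally show ?thesis using that right_mult_one_mat[OF Pc[of J]]
      by (simp add: carrier_matD[OF Pc] carrier_matD[OF Dc])
  qed
  have lim0: "(\<lambda>J. \<gamma> * q ^ J) \<longlonglongrightarrow> 0"
    using LIMSEQ_power_zero[of q] q by (auto intro: tendsto_mult_right_zero)
  have ev: "eventually (\<lambda>J. \<gamma> * q ^ J < 1/2) sequentially"
    by (rule order_tendstoD(2)[OF lim0]) simp
  have lim1: "(\<lambda>J. 2 * mn (Eq q A z) * (\<gamma> * q ^ J)) \<longlonglongrightarrow> 0"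
    by (intro tendsto_mult_right_zero lim0)
  assume pl: "p < N" "l < N"
  have "((\<lambda>J. qprod_part q A z J $$ (p,l) - Eq q A z $$ (p,l)) \<longlongrightarrow> 0) sequentially"
  proof (rule Lim_null_comparison[OF _ lim1], rule eventually_mono[OF ev])
    fix J assume small: "\<gamma> * q ^ J < 1/2"
    let ?P = "qprod_part q A z J"
    have PD: "mn (?P * D J) \<le> mn ?P * mn (D J)" by (rule mn_mult[OF Pc Dc])
    have dd: "dim_row ?P = N" "dim_col ?P = N" "dim_row (D J) = N" "dim_col (D J) = N"
      "dim_row (Eq q A z) = N" "dim_col (Eq q A z) = N"
      using Pc[of J] Dc[of J] Ec[of z] by auto
    have PE: "?P = Eq q A z + (- (?P * D J))"
    proof (rule eq_matI)
      fix i j assume "i < dim_row (Eq q A z + (- (?P * D J)))" "j < dim_col (Eq q A z + (- (?P * D J)))"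
      then have ij: "i < N" "j < N" using dd by auto
      have e1: "(Eq q A z + - (?P * D J)) $$ (i,j) = Eq q A z $$ (i,j) + - ((?P * D J) $$ (i,j))"
        using ij dd by (simp del: index_mult_mat add: index_mult_mat(2,3))
      show "?P $$ (i,j) = (Eq q A z + - (?P * D J)) $$ (i,j)"
        by (simp only: e1 entry[OF ij, of J]) simp
    qed (use dd in auto)
    have "mn ?P \<le> mn (Eq q A z) + mn (- (?P * D J))"
      by (subst PE, rule mn_add[OF Ec]) (use mult_carrier_mat[OF Pc[of J] Dc[of J]] in auto)
    also have "\<dots> \<le> mn (Eq q A z) + mn ?P * mn (D J)" using PD by (simp add: mn_uminus)
    also have "\<dots> \<le> mn (Eq q A z) + mn ?P * (1/2)"
      using mnD[of J] small by (intro add_left_mono mult_left_mono) (auto simp: mn_nonneg)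
    finally have mP: "mn ?P \<le> 2 * mn (Eq q A z)" by simp
    have "norm (?P $$ (p,l) - Eq q A z $$ (p,l)) = norm ((?P * D J) $$ (p,l))"
      using entry[OF pl, of J] by simp
    also have "\<dots> \<le> mn (?P * D J)" by (rule entry_le_mn) (use pl dd in auto)
    also have "\<dots> \<le> mn ?P * mn (D J)" by (rule PD)
    also have "\<dots> \<le> 2 * mn (Eq q A z) * (\<gamma> * q ^ J)"
      by (intro mult_mono mP mnD) (auto simp: mn_nonneg)
    finally show "norm (?P $$ (p,l) - Eq q A z $$ (p,l)) \<le> 2 * mn (Eq q A z) * (\<gamma> * q ^ J)" .
  qed
  then show "(\<lambda>J. qprod_part q A z J $$ (p,l)) \<longlonglongrightarrow> Eq q A z $$ (p,l)"
    by (rule LIM_zero_cancel)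
qed




lemma CEB:
  assumes A: "A \<in> carrier_mat N N" and C: "C \<in> carrier_mat n N" and B: "B \<in> carrier_mat N m"
    and q: "0 \<le> q" and z: "norm z * mn A < 1" and a: "a < n" and b: "b < m"
  shows "summable (\<lambda>k. (complex_of_real (1 / qfact q k) \<cdot>\<^sub>m (C * A ^\<^sub>m k * B)) $$ (a,b) * z ^ k)"
    "(C * Eq q A z * B) $$ (a,b) = (\<Sum>k. (complex_of_real (1 / qfact q k) \<cdot>\<^sub>m (C * A ^\<^sub>m k * B)) $$ (a,b) * z ^ k)"
proof -
  have dA: "dim_row A = N" using A by simp
  have ec: "\<And>k. ecoef q A z k \<in> carrier_mat N N" by (rule ecoef_carrier[OF A])
  have es: "msummable N N (ecoef q A z)" by (rule ecoef_summable(2)[OF A q z])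
  have C1: "C * Eq q A z = msum n N (\<lambda>k. C * ecoef q A z k)"
    unfolding Eq_def dA by (rule msum_left(2)[OF C ec es])
  have s1: "msummable n N (\<lambda>k. C * ecoef q A z k)" by (rule msum_left(1)[OF C ec es])
  have c1: "C * ecoef q A z k \<in> carrier_mat n N" for k using C ec[of k] by simp
  have C2: "C * Eq q A z * B = msum n m (\<lambda>k. C * ecoef q A z k * B)"
    unfolding C1 by (rule msum_right(2)[OF B c1 s1])
  have s2: "msummable n m (\<lambda>k. C * ecoef q A z k * B)" by (rule msum_right(1)[OF B c1 s1])
  have trm: "(C * ecoef q A z k * B) $$ (a,b) = (complex_of_real (1 / qfact q k) \<cdot>\<^sub>m (C * A ^\<^sub>m k * B)) $$ (a,b) * z ^ k" for k
  proof -
    define c where "c = complex_of_real (1 / qfact q k) * z ^ k"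
    have Ak: "A ^\<^sub>m k \<in> carrier_mat N N" using A by (rule pow_carrier_mat)
    have CA: "C * A ^\<^sub>m k \<in> carrier_mat n N" using C Ak by (rule mult_carrier_mat)
    have X: "C * A ^\<^sub>m k * B \<in> carrier_mat n m" using CA B by (rule mult_carrier_mat)
    have "C * ecoef q A z k = c \<cdot>\<^sub>m (C * A ^\<^sub>m k)"
      unfolding ecoef_def c_def by (rule mult_smult_distrib[OF C Ak])
    then have e1: "C * ecoef q A z k * B = c \<cdot>\<^sub>m (C * A ^\<^sub>m k * B)"
      using mult_smult_assoc_mat[OF CA B] by simp
    have i1: "(c \<cdot>\<^sub>m (C * A ^\<^sub>m k * B)) $$ (a,b) = c * (C * A ^\<^sub>m k * B) $$ (a,b)"
      by (rule index_smult_mat(1)) (use X a b in auto)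
    have i2: "(complex_of_real (1 / qfact q k) \<cdot>\<^sub>m (C * A ^\<^sub>m k * B)) $$ (a,b)
        = complex_of_real (1 / qfact q k) * (C * A ^\<^sub>m k * B) $$ (a,b)"
      by (rule index_smult_mat(1)) (use X a b in auto)
    have ac: "\<And>u v Y :: complex. (u * v) * Y = u * Y * v" by (simp add: mult_ac)
    show ?thesis unfolding e1 i1 i2 unfolding c_def by (rule ac)
  qed
  have "summable (\<lambda>k. (C * ecoef q A z k * B) $$ (a,b))" using s2 a b unfolding msummable_def by blast
  then show "summable (\<lambda>k. (complex_of_real (1 / qfact q k) \<cdot>\<^sub>m (C * A ^\<^sub>m k * B)) $$ (a,b) * z ^ k)"
    by (simp only: trm)
  have "(C * Eq q A z * B) $$ (a,b) = (\<Sum>k. (C * ecoef q A z k * B) $$ (a,b))"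
    unfolding C2 using a b by (rule msum_index)
  then show "(C * Eq q A z * B) $$ (a,b) = (\<Sum>k. (complex_of_real (1 / qfact q k) \<cdot>\<^sub>m (C * A ^\<^sub>m k * B)) $$ (a,b) * z ^ k)"
    by (simp only: trm)
qed

lemma small_z:
  assumes "norm z < 1 / (mn A + 1)" shows "norm z * mn A < 1"
proof -
  have p: "0 < mn A + 1" using mn_nonneg[of A] by simp
  have "norm z * (mn A + 1) < 1" using assms p by (simp add: less_divide_eq)
  moreover have "norm z * mn A \<le> norm z * (mn A + 1)" by (intro mult_left_mono) auto
  ultimately show ?thesis by simp
qed

lemma inv_small:
  assumes A: "A \<in> carrier_mat N N" and q: "0 \<le> q" "q < 1" and z: "norm z * mn A < 1"
  shows "invertible_mat (1\<^sub>m N - (complex_of_real ((1 - q) * q ^ j) * z) \<cdot>\<^sub>m A)"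
proof (rule neumann_inv)
  show "(complex_of_real ((1 - q) * q ^ j) * z) \<cdot>\<^sub>m A \<in> carrier_mat N N" using A by simp
  have "\<bar>(1 - q) * q ^ j\<bar> \<le> 1" using q by (simp add: abs_mult power_le_one mult_le_one)
  then have "norm (complex_of_real ((1 - q) * q ^ j)) \<le> 1" unfolding norm_of_real .
  then have "norm (complex_of_real ((1 - q) * q ^ j) * z) \<le> norm z"
    using norm_scal_le[of _ z 1] by simp
  then have "norm (complex_of_real ((1 - q) * q ^ j) * z) * mn A \<le> norm z * mn A"
    by (intro mult_right_mono mn_nonneg)
  then show "mn ((complex_of_real ((1 - q) * q ^ j) * z) \<cdot>\<^sub>m A) < 1" using z by (simp add: mn_smult)
qed

lemma P3_to_P1:
  assumes q: "0 \<le> q" "q < 1" and dims: "\<And>k. T k \<in> carrier_mat n m"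
    and C: "C \<in> carrier_mat n N" and A: "A \<in> carrier_mat N N" and B: "B \<in> carrier_mat N m"
    and T: "\<forall>k. T k = complex_of_real (1 / qfact q k) \<cdot>\<^sub>m (C * A ^\<^sub>m k * B)"
  shows "\<exists>\<epsilon>>0. \<forall>z. norm z < \<epsilon> \<longrightarrow>
                 (\<forall>j. invertible_mat (1\<^sub>m N - (complex_of_real ((1 - q) * q ^ j) * z) \<cdot>\<^sub>m A)) \<and>
                 (\<exists>P. P \<in> carrier_mat N N \<and>
                      (\<forall>a<N. \<forall>b<N. (\<lambda>J. qprod_part q A z J $$ (a,b)) \<longlonglongrightarrow> P $$ (a,b)) \<and>
                      Tser n m T z = C * P * B)"
proof (intro exI[of _ "1 / (mn A + 1)"] conjI allI impI)
  show "0 < 1 / (mn A + 1)" using mn_nonneg[of A] by simp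
  fix z :: complex assume "norm z < 1 / (mn A + 1)"
  then have z: "norm z * mn A < 1" by (rule small_z)
  have inv: "\<And>j. invertible_mat (1\<^sub>m N - (complex_of_real ((1 - q) * q ^ j) * z) \<cdot>\<^sub>m A)"
    by (rule inv_small[OF A q z])
  then show "\<And>j. invertible_mat (1\<^sub>m N - (complex_of_real ((1 - q) * q ^ j) * z) \<cdot>\<^sub>m A)" .
  show "\<exists>P. P \<in> carrier_mat N N \<and>
          (\<forall>a<N. \<forall>b<N. (\<lambda>J. qprod_part q A z J $$ (a,b)) \<longlonglongrightarrow> P $$ (a,b)) \<and>
          Tser n m T z = C * P * B"
  proof (intro exI[of _ "Eq q A z"] conjI allI impI)
    show "Eq q A z \<in> carrier_mat N N" by (rule Eq_carrier[OF A])
    show "(\<lambda>J. qprod_part q A z J $$ (a,b)) \<longlonglongrightarrow> Eq q A z $$ (a,b)" if "a < N" "b < N" for a b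
      by (rule prod_limit(2)[OF A q z inv that])
    show "Tser n m T z = C * Eq q A z * B"
    proof (rule eq_matI)
      fix a b assume "a < dim_row (C * Eq q A z * B)" "b < dim_col (C * Eq q A z * B)"
      then have a: "a < n" and b: "b < m" using C B by auto
      show "Tser n m T z $$ (a,b) = (C * Eq q A z * B) $$ (a,b)"
      proof -
        have "Tser n m T z $$ (a,b) = (\<Sum>k. T k $$ (a,b) * z ^ k)" using a b by (simp add: Tser_def)
        also have "\<dots> = (\<Sum>k. (complex_of_real (1 / qfact q k) \<cdot>\<^sub>m (C * A ^\<^sub>m k * B)) $$ (a,b) * z ^ k)"
          by (simp only: T[rule_format])
        also have "\<dots> = (C * Eq q A z * B) $$ (a,b)" by (rule CEB(2)[OF A C B q(1) z a b, symmetric])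
        finally show ?thesis .
      qed
    next
      show "dim_row (Tser n m T z) = dim_row (C * Eq q A z * B)" using C by (simp add: Tser_def)
      show "dim_col (Tser n m T z) = dim_col (C * Eq q A z * B)" using B by (simp add: Tser_def)
    qed
  qed
qed

lemma P1_to_P3:
  assumes q: "0 \<le> q" "q < 1" and dims: "\<And>k. T k \<in> carrier_mat n m" and r: "r > 0"
    and conv: "\<And>z i j. z \<in> ball 0 r \<Longrightarrow> i < n \<Longrightarrow> j < m \<Longrightarrow>
                 summable (\<lambda>k. T k $$ (i,j) * z ^ k)"
    and C: "C \<in> carrier_mat n N" and A: "A \<in> carrier_mat N N" and B: "B \<in> carrier_mat N m"
    and P1: "\<exists>\<epsilon>>0. \<forall>z. norm z < \<epsilon> \<longrightarrow>
                 (\<forall>j. invertible_mat (1\<^sub>m N - (complex_of_real ((1 - q) * q ^ j) * z) \<cdot>\<^sub>m A)) \<and>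
                 (\<exists>P. P \<in> carrier_mat N N \<and>
                      (\<forall>a<N. \<forall>b<N. (\<lambda>J. qprod_part q A z J $$ (a,b)) \<longlonglongrightarrow> P $$ (a,b)) \<and>
                      Tser n m T z = C * P * B)"
  shows "\<forall>k. T k = complex_of_real (1 / qfact q k) \<cdot>\<^sub>m (C * A ^\<^sub>m k * B)"
proof
  fix k
  obtain \<epsilon> where \<epsilon>: "\<epsilon> > 0" and H: "\<And>z. norm z < \<epsilon> \<Longrightarrow>
                 (\<forall>j. invertible_mat (1\<^sub>m N - (complex_of_real ((1 - q) * q ^ j) * z) \<cdot>\<^sub>m A)) \<and>
                 (\<exists>P. P \<in> carrier_mat N N \<and>
                      (\<forall>a<N. \<forall>b<N. (\<lambda>J. qprod_part q A z J $$ (a,b)) \<longlonglongrightarrow> P $$ (a,b)) \<and>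
                      Tser n m T z = C * P * B)"
    using P1 by blast
  define s where "s = min (min \<epsilon> r) (1 / (mn A + 1))"
  have s: "s > 0" unfolding s_def using \<epsilon> r mn_nonneg[of A] by simp
  have TE: "Tser n m T z = C * Eq q A z * B" if zs: "norm z < s" for z
  proof -
    have z: "norm z * mn A < 1" by (rule small_z) (use zs in \<open>simp add: s_def\<close>)
    have ze: "norm z < \<epsilon>" using zs unfolding s_def by simp
    note Hz = H[OF ze]
    have inv: "\<And>j. invertible_mat (1\<^sub>m N - (complex_of_real ((1 - q) * q ^ j) * z) \<cdot>\<^sub>m A)"
      using Hz by blast
    obtain P where Pc: "P \<in> carrier_mat N N"
      and lim': "\<forall>a<N. \<forall>b<N. (\<lambda>J. qprod_part q A z J $$ (a,b)) \<longlonglongrightarrow> P $$ (a,b)"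
      and eqT: "Tser n m T z = C * P * B"
      using conjunct2[OF Hz] by blast
    have lim: "\<And>a b. a < N \<Longrightarrow> b < N \<Longrightarrow> (\<lambda>J. qprod_part q A z J $$ (a,b)) \<longlonglongrightarrow> P $$ (a,b)"
      using lim' by blast
    have "P = Eq q A z"
    proof (rule eq_matI)
      fix a b assume "a < dim_row (Eq q A z)" "b < dim_col (Eq q A z)"
      then have ab: "a < N" "b < N" by (auto simp: carrier_matD[OF Eq_carrier[OF A]])
      show "P $$ (a,b) = Eq q A z $$ (a,b)"
        by (rule LIMSEQ_unique[OF lim[OF ab] prod_limit(2)[OF A q z inv ab]])
    qed (use Pc in \<open>auto simp: carrier_matD[OF Eq_carrier[OF A]]\<close>)
    then show ?thesis using eqT by simp
  qed
  show "T k = complex_of_real (1 / qfact q k) \<cdot>\<^sub>m (C * A ^\<^sub>m k * B)"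
  proof (rule eq_matI)
    fix a b assume "a < dim_row (complex_of_real (1 / qfact q k) \<cdot>\<^sub>m (C * A ^\<^sub>m k * B))"
      "b < dim_col (complex_of_real (1 / qfact q k) \<cdot>\<^sub>m (C * A ^\<^sub>m k * B))"
    then have a: "a < n" and b: "b < m" using C B by auto
    define d where "d i = T i $$ (a,b) - (complex_of_real (1 / qfact q i) \<cdot>\<^sub>m (C * A ^\<^sub>m i * B)) $$ (a,b)" for i
    have "(\<lambda>i. d i * z ^ i) sums 0" if zs: "norm z < s" for z
    proof -
      have z: "norm z * mn A < 1" by (rule small_z) (use zs in \<open>simp add: s_def\<close>)
      have zb: "z \<in> ball 0 r" using zs by (simp add: s_def)
      have s1: "(\<lambda>i. T i $$ (a,b) * z ^ i) sums (\<Sum>i. T i $$ (a,b) * z ^ i)"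
        using conv[OF zb a b] by (simp add: summable_sums)
      have s2: "(\<lambda>i. (complex_of_real (1 / qfact q i) \<cdot>\<^sub>m (C * A ^\<^sub>m i * B)) $$ (a,b) * z ^ i)
          sums (C * Eq q A z * B) $$ (a,b)"
        unfolding CEB(2)[OF A C B q(1) z a b] using CEB(1)[OF A C B q(1) z a b] by (simp add: summable_sums)
      have e: "(\<Sum>i. T i $$ (a,b) * z ^ i) = (C * Eq q A z * B) $$ (a,b)"
      proof -
        have "Tser n m T z $$ (a,b) = (\<Sum>i. T i $$ (a,b) * z ^ i)" using a b by (simp add: Tser_def)
        then show ?thesis using TE[OF zs] by simp
      qed
      show ?thesis using sums_diff[OF s1 s2] e by (simp add: d_def left_diff_distrib)
    qed
    then have "d k = 0" by (intro powser_unique[OF s])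
    then show "T k $$ (a,b) = (complex_of_real (1 / qfact q k) \<cdot>\<^sub>m (C * A ^\<^sub>m k * B)) $$ (a,b)"
      unfolding d_def by (simp only: right_minus_eq)
  next
    show "dim_row (T k) = dim_row (complex_of_real (1 / qfact q k) \<cdot>\<^sub>m (C * A ^\<^sub>m k * B))"
      using dims[of k] C by simp
    show "dim_col (T k) = dim_col (complex_of_real (1 / qfact q k) \<cdot>\<^sub>m (C * A ^\<^sub>m k * B))"
      using dims[of k] B by simp
  qed
qed

theorem theorem5p8:
  fixes q r :: real and n m :: nat and T :: "nat \<Rightarrow> complex mat"
  assumes q: "0 \<le> q" "q < 1"
    and dims: "\<And>k. T k \<in> carrier_mat n m"
    and r: "r > 0"
    and conv: "\<And>z i j. z \<in> ball 0 r \<Longrightarrow> i < n \<Longrightarrow> j < m \<Longrightarrow>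
                 summable (\<lambda>k. T k $$ (i,j) * z ^ k)"
  defines "P1 \<equiv> (\<exists>N C A B. C \<in> carrier_mat n N \<and> A \<in> carrier_mat N N \<and> B \<in> carrier_mat N m \<and>
              (\<exists>\<epsilon>>0. \<forall>z. norm z < \<epsilon> \<longrightarrow>
                 (\<forall>j. invertible_mat (1\<^sub>m N - (complex_of_real ((1 - q) * q ^ j) * z) \<cdot>\<^sub>m A)) \<and>
                 (\<exists>P. P \<in> carrier_mat N N \<and>
                      (\<forall>a<N. \<forall>b<N. (\<lambda>J. qprod_part q A z J $$ (a,b)) \<longlonglongrightarrow> P $$ (a,b)) \<and>
                      Tser n m T z = C * P * B)))"
    and "P2 \<equiv> fin_dim_span
              ((\<lambda>(j,b). (\<lambda>(i,a). if a < n then complex_of_real (qfact q (i+j)) * T (i+j) $$ (a,b) else 0))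
                 ` (UNIV \<times> {..<m}))"
    and "P3 \<equiv> (\<exists>N C A B. C \<in> carrier_mat n N \<and> A \<in> carrier_mat N N \<and> B \<in> carrier_mat N m \<and>
              (\<forall>k. T k = complex_of_real (1 / qfact q k) \<cdot>\<^sub>m (C * A ^\<^sub>m k * B)))"
    and "P4 \<equiv> fin_dim_span
              ((\<lambda>(k,b). (\<lambda>(z,a). if z \<in> ball 0 r \<and> a < n
                                    then ((RqM q n m ^^ k) (Tser n m T)) z $$ (a,b) else 0))
                 ` (UNIV \<times> {..<m}))"
  shows "(P1 \<longleftrightarrow> P2) \<and> (P2 \<longleftrightarrow> P3) \<and> (P3 \<longleftrightarrow> P4)"
proof -
  have P2eq: "P2 = fin_dim_span (hcol q n T ` (UNIV \<times> {..<m}))"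
    unfolding P2_def hcol_def ..
  have P4eq: "P4 = fin_dim_span (wv q r n T ` (UNIV \<times> {..<m}))"
    unfolding P4_def using P4_set[OF q r conv] by simp
  have P13: "P1 \<longleftrightarrow> P3"
  proof
    assume "P1"
    then obtain N C A B where C: "C \<in> carrier_mat n N" and A: "A \<in> carrier_mat N N" and B: "B \<in> carrier_mat N m"
      and H: "\<exists>\<epsilon>>0. \<forall>z. norm z < \<epsilon> \<longrightarrow>
                 (\<forall>j. invertible_mat (1\<^sub>m N - (complex_of_real ((1 - q) * q ^ j) * z) \<cdot>\<^sub>m A)) \<and>
                 (\<exists>P. P \<in> carrier_mat N N \<and>
                      (\<forall>a<N. \<forall>b<N. (\<lambda>J. qprod_part q A z J $$ (a,b)) \<longlonglongrightarrow> P $$ (a,b)) \<and>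
                      Tser n m T z = C * P * B)"
      unfolding P1_def by blast
    have "\<forall>k. T k = complex_of_real (1 / qfact q k) \<cdot>\<^sub>m (C * A ^\<^sub>m k * B)"
      by (rule P1_to_P3[OF q dims r conv C A B H])
    then show "P3" unfolding P3_def using C A B by blast
  next
    assume "P3"
    then obtain N C A B where C: "C \<in> carrier_mat n N" and A: "A \<in> carrier_mat N N" and B: "B \<in> carrier_mat N m"
      and T: "\<forall>k. T k = complex_of_real (1 / qfact q k) \<cdot>\<^sub>m (C * A ^\<^sub>m k * B)"
      unfolding P3_def by blast
    have "\<exists>\<epsilon>>0. \<forall>z. norm z < \<epsilon> \<longrightarrow>
                 (\<forall>j. invertible_mat (1\<^sub>m N - (complex_of_real ((1 - q) * q ^ j) * z) \<cdot>\<^sub>m A)) \<and>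
                 (\<exists>P. P \<in> carrier_mat N N \<and>
                      (\<forall>a<N. \<forall>b<N. (\<lambda>J. qprod_part q A z J $$ (a,b)) \<longlonglongrightarrow> P $$ (a,b)) \<and>
                      Tser n m T z = C * P * B)"
      by (rule P3_to_P1[OF q dims C A B T])
    then show "P1" unfolding P1_def using C A B by blast
  qed
  have P23: "P2 \<longleftrightarrow> P3"
  proof
    assume "P2"
    then show "P3" unfolding P3_def P2eq by (rule P2_to_P3[OF q(1) dims])
  next
    assume "P3"
    then obtain N C A B where C: "C \<in> carrier_mat n N" and A: "A \<in> carrier_mat N N" and B: "B \<in> carrier_mat N m"
      and T: "\<forall>k. T k = complex_of_real (1 / qfact q k) \<cdot>\<^sub>m (C * A ^\<^sub>m k * B)"
      unfolding P3_def by blast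
    show "P2" unfolding P2eq by (rule P3_to_P2[OF q(1) dims C A B]) (use T in blast)
  qed
  have P24: "P2 \<longleftrightarrow> P4"
  proof
    assume h: "P2"
    have fd: "fin_dim_span (hcol q n T ` (UNIV \<times> {..<m}))" using h P2eq by simp
    show "P4" unfolding P4eq by (rule P2_to_P4[OF q _ fd]) (fact conv)
  next
    assume h: "P4"
    have fd: "fin_dim_span (wv q r n T ` (UNIV \<times> {..<m}))" using h P4eq by simp
    show "P2" unfolding P2eq by (rule P4_to_P2[OF q r _ fd]) (fact conv)
  qed
  show ?thesis using P13 P23 P24 by blast
qed


end
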